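(* For every integer $n>2$ and every automorphism $\varphi\in\mathrm{Aut}(F)$, $(\varphi(r_1),\varphi(r_2))\sim_{AC}(r_1,r_2)$, where $(r_1,r_2)=\mathrm{AK}(n)=(xyxy^{-1}x^{-1}y^{-1},\ x^ny^{-(n+1)})$.
   Context: $F=F(x,y)$ is the free group on $\{x,y\}$. The Akbulut–Kurby pair is $\mathrm{AK}(n)=(xyxy^{-1}x^{-1}y^{-1},\ x^{n}y^{-(n+1)})$, i.e. the presentation $\langle x,y\mid xyx=yxy,\ x^n=y^{n+1}\rangle$ of the trivial group. The Andrews–Curtis (AC) moves on a pair $(r_1,r_2)\in F^2$ are: replace $r_i$ by $r_ir_j$ ($i\ne j$); replace $r_i$ by $r_i^{-1}$; replace $r_i$ by $w^{-1}r_iw$ for some $w\in F$. Two pairs are AC-equivalent, $\sim_{AC}$, if one can be obtained from the other by a finite sequence of AC-moves. *)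

theory Defs
  imports "HOL-Algebra.Group"
begin

text \<open>The free group F(x,y), realised as reduced words. A letter is a pair
  (inverted, generator): generator False = x, True = y; inverted True means the
  inverse of that generator.\<close>

type_synonym letter = "bool \<times> bool"

definition gx :: letter where "gx = (False, False)"
definition gy :: letter where "gy = (False, True)"

definition inv_letter :: "letter \<Rightarrow> letter" where
  "inv_letter a = (\<not> fst a, snd a)"

fun reduced :: "letter list \<Rightarrow> bool" where
  "reduced [] = True"
| "reduced [a] = True"
| "reduced (a # b # w) = (b \<noteq> inv_letter a \<and> reduced (b # w))"

fun cancel1 :: "letter \<Rightarrow> letter list \<Rightarrow> letter list" where
  "cancel1 a [] = [a]"
| "cancel1 a (b # w) = (if b = inv_letter a then w else a # b # w)"

fun reduce :: "letter list \<Rightarrow> letter list" where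
  "reduce [] = []"
| "reduce (a # w) = cancel1 a (reduce w)"

definition fmult :: "letter list \<Rightarrow> letter list \<Rightarrow> letter list" where
  "fmult u v = reduce (u @ v)"

definition finv :: "letter list \<Rightarrow> letter list" where
  "finv w = rev (map inv_letter w)"

definition free_group :: "letter list monoid" where
  "free_group = \<lparr>carrier = {w. reduced w}, monoid.mult = fmult, one = []\<rparr>"

definition Aut_F :: "(letter list \<Rightarrow> letter list) set" where
  "Aut_F = iso free_group free_group"

inductive AC_move :: "letter list \<times> letter list \<Rightarrow> letter list \<times> letter list \<Rightarrow> bool" where
  mult1: "AC_move (r1, r2) (fmult r1 r2, r2)"
| mult2: "AC_move (r1, r2) (r1, fmult r2 r1)"
| inv1: "AC_move (r1, r2) (finv r1, r2)"
| inv2: "AC_move (r1, r2) (r1, finv r2)"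
| conj1: "reduced w \<Longrightarrow> AC_move (r1, r2) (fmult (finv w) (fmult r1 w), r2)"
| conj2: "reduced w \<Longrightarrow> AC_move (r1, r2) (r1, fmult (finv w) (fmult r2 w))"

definition AC_equiv :: "letter list \<times> letter list \<Rightarrow> letter list \<times> letter list \<Rightarrow> bool" where
  "AC_equiv p q = AC_move\<^sup>*\<^sup>* p q"

definition AK :: "nat \<Rightarrow> letter list \<times> letter list" where
  "AK n = ([gx, gy, gx, inv_letter gy, inv_letter gx, inv_letter gy],
           replicate n gx @ replicate (n + 1) (inv_letter gy))"

end

theory Submission
  imports Defs "HOL-Algebra.Coset" "HOL-Algebra.Generated_Groups"
begin


lemma inv_letter_inv[simp]: "inv_letter (inv_letter a) = a"
  by (cases a) (simp add: inv_letter_def)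

lemma inv_letter_neq[simp]: "inv_letter a \<noteq> a" "a \<noteq> inv_letter a"
  by (cases a, simp add: inv_letter_def)+

lemma inv_letter_eq_iff[simp]: "inv_letter a = inv_letter b \<longleftrightarrow> a = b"
  by (metis inv_letter_inv)

lemma reduced_Cons: "reduced (a # w) \<longleftrightarrow> reduced w \<and> (w = [] \<or> hd w \<noteq> inv_letter a)"
  by (cases w) auto

lemma reduced_tl: "reduced (a # w) \<Longrightarrow> reduced w"
  by (simp add: reduced_Cons)

lemma reduced_cancel1: "reduced w \<Longrightarrow> reduced (cancel1 a w)"
  by (cases w) (auto simp: reduced_Cons)

lemma reduced_reduce[simp]: "reduced (reduce w)"
  by (induction w) (auto intro: reduced_cancel1)

lemma cancel1_nc: "w = [] \<or> hd w \<noteq> inv_letter a \<Longrightarrow> cancel1 a w = a # w"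
  by (cases w) auto

lemma reduce_reduced: "reduced w \<Longrightarrow> reduce w = w"
  by (induction w) (auto simp: reduced_Cons cancel1_nc)

lemma reduce_idem[simp]: "reduce (reduce w) = reduce w"
  using reduce_reduced reduced_reduce by blast

lemma cancel1_cancel1: "reduced w \<Longrightarrow> cancel1 a (cancel1 (inv_letter a) w) = w"
  by (cases w) (auto simp: reduced_Cons cancel1_nc)

lemma reduce_append_right: "reduce (u @ v) = reduce (u @ reduce v)"
  by (induction u) auto

lemma reduce_cancel1: "reduced w \<Longrightarrow> reduce (cancel1 a w @ v) = cancel1 a (reduce (w @ v))"
proof (cases w)
  case (Cons b w')
  assume r: "reduced w"
  show ?thesis
  proof (cases "b = inv_letter a")
    case True
    then show ?thesis using Cons r
      by (simp add: cancel1_cancel1[of _ "a"])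
  qed (use Cons in \<open>auto simp: cancel1_nc\<close>)
qed simp

lemma reduce_append_left: "reduce (reduce u @ v) = reduce (u @ v)"
  by (induction u) (auto simp: reduce_cancel1)

definition "RW = {w. reduced w}"

lemma fmult_assoc: "fmult (fmult u v) w = fmult u (fmult v w)"
  unfolding fmult_def
  by (metis append_assoc reduce_append_left reduce_append_right)

lemma reduced_append:
  "reduced (u @ v) \<longleftrightarrow> reduced u \<and> reduced v \<and> (u = [] \<or> v = [] \<or> hd v \<noteq> inv_letter (last u))"
proof (induction u)
  case (Cons a u)
  then show ?case by (cases u) (auto simp: reduced_Cons)
qed simp

lemma finv_Cons: "finv (a # w) = finv w @ [inv_letter a]"
  by (simp add: finv_def)

lemma finv_Nil[simp]: "finv [] = []" by (simp add: finv_def)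

lemma finv_finv[simp]: "finv (finv w) = w"
  by (simp add: finv_def rev_map comp_def)

lemma length_finv[simp]: "length (finv w) = length w"
  by (simp add: finv_def)

lemma finv_append: "finv (u @ v) = finv v @ finv u"
  by (simp add: finv_def)

lemma reduced_finv: "reduced w \<Longrightarrow> reduced (finv w)"
proof (induction w)
  case (Cons a w)
  then show ?case
    by (cases w) (auto simp: finv_Cons reduced_append reduced_Cons finv_def last_map last_rev hd_map)
qed simp

lemma reduce_finv_cancel: "reduce (finv w @ w) = []"
proof (induction w)
  case (Cons a w)
  have "reduce (finv (a # w) @ a # w) = reduce (finv w @ reduce ([inv_letter a, a] @ w))"
    by (simp add: finv_Cons) (subst reduce_append_right, simp)
  also have "reduce ([inv_letter a, a] @ w) = reduce w"
    using cancel1_cancel1[of "reduce w" "inv_letter a"] by simp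
  finally have "reduce (finv (a # w) @ a # w) = reduce (finv w @ reduce w)" .
  then show ?case using Cons by (simp add: reduce_append_right[symmetric])
qed simp

lemma free_group_is_group: "group free_group"
proof (rule groupI)
  show "\<And>x y. x \<in> carrier free_group \<Longrightarrow> y \<in> carrier free_group \<Longrightarrow> x \<otimes>\<^bsub>free_group\<^esub> y \<in> carrier free_group"
    by (simp add: free_group_def fmult_def)
  show "\<one>\<^bsub>free_group\<^esub> \<in> carrier free_group" by (simp add: free_group_def)
  show "\<And>x y z. x \<in> carrier free_group \<Longrightarrow> y \<in> carrier free_group \<Longrightarrow> z \<in> carrier free_group \<Longrightarrow>
     x \<otimes>\<^bsub>free_group\<^esub> y \<otimes>\<^bsub>free_group\<^esub> z = x \<otimes>\<^bsub>free_group\<^esub> (y \<otimes>\<^bsub>free_group\<^esub> z)"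
    by (simp add: free_group_def fmult_assoc)
  show "\<And>x. x \<in> carrier free_group \<Longrightarrow> \<one>\<^bsub>free_group\<^esub> \<otimes>\<^bsub>free_group\<^esub> x = x"
    by (simp add: free_group_def fmult_def reduce_reduced)
  show "\<And>x. x \<in> carrier free_group \<Longrightarrow> \<exists>y\<in>carrier free_group. y \<otimes>\<^bsub>free_group\<^esub> x = \<one>\<^bsub>free_group\<^esub>"
    by (rule_tac x="finv x" in bexI) (auto simp: free_group_def fmult_def reduce_finv_cancel reduced_finv)
qed

interpretation F: group free_group by (rule free_group_is_group)

lemma carrier_F[simp]: "carrier free_group = {w. reduced w}"
  and mult_F[simp]: "x \<otimes>\<^bsub>free_group\<^esub> y = fmult x y"
  and one_F[simp]: "\<one>\<^bsub>free_group\<^esub> = []"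
  by (simp_all add: free_group_def)

lemma inv_F[simp]: "reduced w \<Longrightarrow> inv\<^bsub>free_group\<^esub> w = finv w"
  by (rule F.inv_equality) (auto simp: fmult_def reduce_finv_cancel reduced_finv)

lemma fmult_reduced[simp]: "reduced (fmult u v)"
  by (simp add: fmult_def)

lemma fmult_append: "reduced (u @ v) \<Longrightarrow> fmult u v = u @ v"
  by (simp add: fmult_def reduce_reduced)



lemma fmult_Nil1[simp]: "reduced w \<Longrightarrow> fmult [] w = w"
  and fmult_Nil2[simp]: "reduced w \<Longrightarrow> fmult w [] = w"
  by (simp_all add: fmult_def reduce_reduced)

lemma fmult_finv1: "reduced w \<Longrightarrow> fmult (finv w) w = []"
  by (simp add: fmult_def reduce_finv_cancel)

lemma fmult_finv2: "reduced w \<Longrightarrow> fmult w (finv w) = []"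
  using reduce_finv_cancel[of "finv w"] by (simp add: fmult_def)

lemma fmult_cancel1: "reduced w \<Longrightarrow> reduced t \<Longrightarrow> fmult (finv w) (fmult w t) = t"
  by (metis fmult_Nil1 fmult_assoc fmult_finv1)

lemma fmult_cancel2: "reduced w \<Longrightarrow> reduced t \<Longrightarrow> fmult w (fmult (finv w) t) = t"
  by (metis fmult_Nil1 fmult_assoc fmult_finv2)

lemma finv_fmult: "reduced a \<Longrightarrow> reduced b \<Longrightarrow> finv (fmult a b) = fmult (finv b) (finv a)"
  using F.inv_mult_group[of a b] by (simp add: reduced_finv)

lemma fmult_single: "reduced (a # w) \<Longrightarrow> fmult [a] w = a # w"
  by (simp add: fmult_def reduce_reduced del: reduce.simps)

definition img :: "letter list \<Rightarrow> letter list \<Rightarrow> letter \<Rightarrow> letter list" where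
  "img u v a = (if fst a then finv (if snd a then v else u) else (if snd a then v else u))"

fun sub :: "letter list \<Rightarrow> letter list \<Rightarrow> letter list \<Rightarrow> letter list" where
  "sub u v [] = []"
| "sub u v (a # w) = fmult (img u v a) (sub u v w)"

lemma reduced_img[simp]: "reduced u \<Longrightarrow> reduced v \<Longrightarrow> reduced (img u v a)"
  by (simp add: img_def reduced_finv)

lemma reduced_sub[simp]: "reduced (sub u v w)"
  by (cases w) auto

lemma img_inv: "img u v (inv_letter a) = finv (img u v a)"
  by (simp add: img_def inv_letter_def)

lemma sub_append: "reduced u \<Longrightarrow> reduced v \<Longrightarrow> sub u v (w1 @ w2) = fmult (sub u v w1) (sub u v w2)"
  by (induction w1) (auto simp: fmult_assoc)

lemma sub_cancel1: "reduced u \<Longrightarrow> reduced v \<Longrightarrow> sub u v (cancel1 a z) = fmult (img u v a) (sub u v z)"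
proof (cases z)
  case (Cons b z')
  assume uv: "reduced u" "reduced v"
  then show ?thesis using Cons
    by (auto simp: img_inv fmult_cancel2[symmetric] fmult_assoc[symmetric])
       (metis fmult_assoc fmult_cancel2 reduced_img reduced_sub)
qed simp

lemma sub_reduce: "reduced u \<Longrightarrow> reduced v \<Longrightarrow> sub u v (reduce w) = sub u v w"
  by (induction w) (auto simp: sub_cancel1)

lemma sub_fmult: "reduced u \<Longrightarrow> reduced v \<Longrightarrow> sub u v (fmult w1 w2) = fmult (sub u v w1) (sub u v w2)"
  by (simp add: fmult_def sub_reduce sub_append)

lemma sub_finv: "reduced u \<Longrightarrow> reduced v \<Longrightarrow> sub u v (finv w) = finv (sub u v w)"
proof (induction w)
  case (Cons a w)
  then show ?case
    by (simp add: finv_Cons sub_append img_inv finv_fmult reduced_finv)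
qed simp

lemma sub_hom: "reduced u \<Longrightarrow> reduced v \<Longrightarrow> sub u v \<in> hom free_group free_group"
  by (rule homI) (auto simp: sub_fmult)

lemma img_id: "img [gx] [gy] a = [a]"
  by (cases a) (auto simp: img_def gx_def gy_def finv_def inv_letter_def)

lemma sub_id: "reduced w \<Longrightarrow> sub [gx] [gy] w = w"
proof (induction w)
  case (Cons a w)
  then show ?case using reduced_tl[OF Cons.prems]
    by (simp add: img_id fmult_single)
qed simp

lemma img_comp: "reduced u \<Longrightarrow> reduced v \<Longrightarrow> reduced a \<Longrightarrow> reduced b \<Longrightarrow>
   sub u v (img a b l) = img (sub u v a) (sub u v b) l"
  by (simp add: img_def sub_finv)

lemma sub_comp: "reduced u \<Longrightarrow> reduced v \<Longrightarrow> reduced a \<Longrightarrow> reduced b \<Longrightarrow>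
   sub u v (sub a b w) = sub (sub u v a) (sub u v b) w"
  by (induction w) (auto simp: sub_fmult img_comp)

definition cj :: "letter list \<Rightarrow> letter list \<Rightarrow> letter list" where
  "cj g w = fmult (finv g) (fmult w g)"

lemma reduced_cj[simp]: "reduced (cj g w)" by (simp add: cj_def)

lemma cj_fmult: "reduced g \<Longrightarrow> reduced a \<Longrightarrow> reduced b \<Longrightarrow> cj g (fmult a b) = fmult (cj g a) (cj g b)"
  unfolding cj_def by (simp add: fmult_assoc fmult_cancel2 reduced_finv)

lemma cj_finv: "reduced g \<Longrightarrow> reduced a \<Longrightarrow> cj g (finv a) = finv (cj g a)"
  unfolding cj_def by (simp add: finv_fmult fmult_assoc reduced_finv)

lemma cj_Nil[simp]: "reduced g \<Longrightarrow> cj g [] = []"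
  by (simp add: cj_def fmult_finv1 reduced_finv)

lemma img_cj: "reduced g \<Longrightarrow> reduced u \<Longrightarrow> reduced v \<Longrightarrow> img (cj g u) (cj g v) l = cj g (img u v l)"
  by (simp add: img_def cj_finv)

lemma sub_cj: "reduced g \<Longrightarrow> reduced u \<Longrightarrow> reduced v \<Longrightarrow> sub (cj g u) (cj g v) w = cj g (sub u v w)"
  by (induction w) (auto simp: img_cj cj_fmult)

lemma hom_sub_eq:
  assumes h: "h \<in> hom free_group free_group" and w: "reduced w"
  shows "h w = sub (h [gx]) (h [gy]) w"
  using w
proof (induction w)
  case Nil
  interpret group_hom free_group free_group h
    using h by (simp add: group_hom_def group_hom_axioms_def F.is_group)
  show ?case using hom_one by simp
next
  case (Cons a w)
  interpret group_hom free_group free_group h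
    using h by (simp add: group_hom_def group_hom_axioms_def F.is_group)
  have rw: "reduced w" using Cons.prems by (rule reduced_tl)
  have e: "a # w = fmult [a] w" using Cons.prems by (simp add: fmult_single)
  have hx: "reduced (h [gx])" "reduced (h [gy])"
    using hom_closed[of "[gx]"] hom_closed[of "[gy]"] by auto
  have ha: "h [a] = img (h [gx]) (h [gy]) a"
  proof -
    have "a = gx \<or> a = gy \<or> [a] = finv [gx] \<or> [a] = finv [gy]"
      by (cases a) (auto simp: finv_def gx_def gy_def inv_letter_def)
    moreover have "img p q gx = p" "img p q gy = q" for p q
      by (simp_all add: img_def gx_def gy_def)
    moreover have "[a] = finv [gx] \<Longrightarrow> img p q a = finv p" for p q
      by (cases a) (simp add: img_def finv_def gx_def inv_letter_def)
    moreover have "[a] = finv [gy] \<Longrightarrow> img p q a = finv q" for p q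
      by (cases a) (simp add: img_def finv_def gy_def inv_letter_def)
    moreover have "h (finv [gx]) = finv (h [gx])" "h (finv [gy]) = finv (h [gy])"
      using hom_inv[of "[gx]"] hom_inv[of "[gy]"] hx by (auto simp: gx_def gy_def)
    ultimately show ?thesis
      by (elim disjE) (metis, metis, metis, metis)
  qed
  have "h (a # w) = fmult (h [a]) (h w)"
    using e hom_mult[of "[a]" w] rw by simp
  then show ?case using Cons.IH[OF rw] ha by simp
qed



definition RP :: "letter list \<times> letter list \<Rightarrow> bool" where
  "RP p \<longleftrightarrow> reduced (fst p) \<and> reduced (snd p)"

lemma RP_simp[simp]: "RP (a, b) \<longleftrightarrow> reduced a \<and> reduced b"
  by (simp add: RP_def)

lemma AC_move_RP: "AC_move p q \<Longrightarrow> RP p \<Longrightarrow> RP q"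
  by (induction rule: AC_move.induct) (auto simp: reduced_finv)

lemma AC_equiv_RP: "AC_equiv p q \<Longrightarrow> RP p \<Longrightarrow> RP q"
  unfolding AC_equiv_def by (induction rule: rtranclp_induct) (auto dest: AC_move_RP)

lemma AC_refl[simp]: "AC_equiv p p"
  by (simp add: AC_equiv_def)

lemma AC_trans: "AC_equiv p q \<Longrightarrow> AC_equiv q r \<Longrightarrow> AC_equiv p r"
  unfolding AC_equiv_def by simp

lemma AC_step: "AC_move p q \<Longrightarrow> AC_equiv q r \<Longrightarrow> AC_equiv p r"
  unfolding AC_equiv_def by (simp add: converse_rtranclp_into_rtranclp)

lemma AC_one: "AC_move p q \<Longrightarrow> AC_equiv p q"
  unfolding AC_equiv_def by simp

lemma AC_one_eq: "AC_move p q \<Longrightarrow> q = q' \<Longrightarrow> AC_equiv p q'"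
  unfolding AC_equiv_def by simp

lemma mv_mult1: "c = fmult a b \<Longrightarrow> AC_move (a, b) (c, b)" by (simp add: AC_move.mult1)
lemma mv_mult2: "c = fmult b a \<Longrightarrow> AC_move (a, b) (a, c)" by (simp add: AC_move.mult2)
lemma mv_inv1: "c = finv a \<Longrightarrow> AC_move (a, b) (c, b)" by (simp add: AC_move.inv1)
lemma mv_inv2: "c = finv b \<Longrightarrow> AC_move (a, b) (a, c)" by (simp add: AC_move.inv2)
lemma mv_conj1: "reduced w \<Longrightarrow> c = cj w a \<Longrightarrow> AC_move (a, b) (c, b)"
  by (simp add: AC_move.conj1 cj_def)
lemma mv_conj2: "reduced w \<Longrightarrow> c = cj w b \<Longrightarrow> AC_move (a, b) (a, c)"
  by (simp add: AC_move.conj2 cj_def)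

lemma cj_cj: "reduced g \<Longrightarrow> reduced t \<Longrightarrow> cj g (cj (finv g) t) = t"
  unfolding cj_def by (simp add: fmult_assoc fmult_cancel1 fmult_cancel2 reduced_finv fmult_finv1 fmult_finv2)

lemma cj_cj': "reduced g \<Longrightarrow> reduced t \<Longrightarrow> cj (finv g) (cj g t) = t"
  using cj_cj[of "finv g" t] by (simp add: reduced_finv)

lemma AC_move_sym: "AC_move p q \<Longrightarrow> RP p \<Longrightarrow> AC_equiv q p"
proof (induction rule: AC_move.induct)
  case (mult1 r1 r2)
  show ?case
    apply (rule AC_step[OF mv_inv2[OF refl]])
    apply (rule AC_step[OF mv_mult1[OF refl]])
    apply (rule AC_one_eq[OF mv_inv2[OF refl]])
    using mult1 by (simp add: fmult_assoc fmult_finv2)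
next
  case (mult2 r1 r2)
  show ?case
    apply (rule AC_step[OF mv_inv1[OF refl]])
    apply (rule AC_step[OF mv_mult2[OF refl]])
    apply (rule AC_one_eq[OF mv_inv1[OF refl]])
    using mult2 by (simp add: fmult_assoc fmult_finv2)
next
  case (inv1 r1 r2)
  then show ?case by (intro AC_one[OF mv_inv1]) simp
next
  case (inv2 r1 r2)
  then show ?case by (intro AC_one[OF mv_inv2]) simp
next
  case (conj1 w r1 r2)
  then show ?case
    by (intro AC_one[OF mv_conj1[of "finv w"]]) (auto simp: reduced_finv cj_cj' cj_def[symmetric])
next
  case (conj2 w r1 r2)
  then show ?case
    by (intro AC_one[OF mv_conj2[of "finv w"]]) (auto simp: reduced_finv cj_cj' cj_def[symmetric])
qed

lemma AC_sym: "AC_equiv p q \<Longrightarrow> RP p \<Longrightarrow> AC_equiv q p"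
proof (unfold AC_equiv_def, induction rule: rtranclp_induct)
  case (step y z)
  have "RP y" using step AC_equiv_RP AC_equiv_def by metis
  then show ?case using step AC_move_sym[of y z] unfolding AC_equiv_def by simp
qed simp

lemma AC_move_swap: "AC_move p q \<Longrightarrow> AC_move (prod.swap p) (prod.swap q)"
  by (induction rule: AC_move.induct) (auto intro: AC_move.intros)

lemma AC_swap: "AC_equiv (a, b) (c, d) \<Longrightarrow> AC_equiv (b, a) (d, c)"
proof -
  have "AC_equiv p q \<Longrightarrow> AC_equiv (prod.swap p) (prod.swap q)" for p q
    unfolding AC_equiv_def
    by (induction rule: rtranclp_induct) (auto intro: rtranclp.rtrancl_into_rtrancl AC_move_swap)
  from this[of "(a,b)" "(c,d)"] show "AC_equiv (a, b) (c, d) \<Longrightarrow> AC_equiv (b, a) (d, c)" by simp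
qed

lemma hom_props:
  assumes "h \<in> hom free_group free_group"
  shows "\<And>a b. reduced a \<Longrightarrow> reduced b \<Longrightarrow> h (fmult a b) = fmult (h a) (h b)"
    and "\<And>a. reduced a \<Longrightarrow> h (finv a) = finv (h a)"
    and "\<And>a. reduced a \<Longrightarrow> reduced (h a)"
proof -
  interpret group_hom free_group free_group h
    using assms by (simp add: group_hom_def group_hom_axioms_def F.is_group)
  show "\<And>a b. reduced a \<Longrightarrow> reduced b \<Longrightarrow> h (fmult a b) = fmult (h a) (h b)"
    using hom_mult by simp
  show "\<And>a. reduced a \<Longrightarrow> reduced (h a)" using hom_closed by simp
  then show "\<And>a. reduced a \<Longrightarrow> h (finv a) = finv (h a)" using hom_inv by simp
qed

lemma AC_move_hom:
  assumes h: "h \<in> hom free_group free_group"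
  shows "AC_move p q \<Longrightarrow> RP p \<Longrightarrow> AC_move (h (fst p), h (snd p)) (h (fst q), h (snd q))"
proof (induction rule: AC_move.induct)
  case (conj1 w r1 r2)
  show ?case
    apply (simp only: prod.sel)
    apply (rule mv_conj1[of "h w"])
    using conj1 hom_props[OF h] by (auto simp: cj_def reduced_finv)
next
  case (conj2 w r1 r2)
  show ?case
    apply (simp only: prod.sel)
    apply (rule mv_conj2[of "h w"])
    using conj2 hom_props[OF h] by (auto simp: cj_def reduced_finv)
qed (use hom_props[OF h] in \<open>auto intro: AC_move.intros\<close>)

lemma AC_hom:
  assumes h: "h \<in> hom free_group free_group" and "AC_equiv p q" and "RP p"
  shows "AC_equiv (h (fst p), h (snd p)) (h (fst q), h (snd q))"
  using assms(2,3) unfolding AC_equiv_def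
proof (induction rule: rtranclp_induct)
  case (step y z)
  have "RP y" using step AC_equiv_RP AC_equiv_def by metis
  then show ?case using step AC_move_hom[OF h, of y z] by (simp add: rtranclp.rtrancl_into_rtrancl)
qed simp

definition NC :: "letter list \<Rightarrow> letter list set" where
  "NC r = generate free_group {cj g r | g. reduced g}"

lemma NC_sub: "{cj g r | g. reduced g} \<subseteq> carrier free_group" by auto

lemma NC_reduced: "k \<in> NC r \<Longrightarrow> reduced k"
  using F.generate_in_carrier[OF NC_sub] unfolding NC_def by auto

lemma NC_AC:
  assumes r1: "reduced r1" and k: "k \<in> NC r1"
  shows "reduced r2 \<Longrightarrow> AC_equiv (r1, r2) (r1, fmult r2 k)"
  using k unfolding NC_def
proof (induction k arbitrary: r2 rule: generate.induct)
  case one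
  then show ?case by simp
next
  case (incl h)
  then obtain g where g: "reduced g" "h = cj g r1" by auto
  show ?case
    apply (rule AC_step[OF mv_conj2[of "finv g", OF _ refl]])
     apply (simp add: g reduced_finv)
    apply (rule AC_step[OF mv_mult2[OF refl]])
    apply (rule AC_one[OF mv_conj2[of g]])
    using g incl r1 by (simp_all add: cj_fmult reduced_finv cj_cj)
next
  case (inv h)
  then obtain g where g: "reduced g" "h = cj g r1" by auto
  have ih: "AC_equiv (r1, fmult r2 (finv h)) (r1, r2)"
  proof -
    have "AC_equiv (r1, fmult r2 (finv h)) (r1, fmult (fmult r2 (finv h)) (cj g r1))"
      apply (rule AC_step[OF mv_conj2[of "finv g", OF _ refl]])
       apply (simp add: g reduced_finv)
      apply (rule AC_step[OF mv_mult2[OF refl]])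
      apply (rule AC_one[OF mv_conj2[of g]])
      using g inv r1 by (simp_all add: cj_fmult reduced_finv cj_cj)
    then show ?thesis using g inv by (simp add: fmult_assoc fmult_finv1)
  qed
  show ?case using AC_sym[OF ih] inv g r1 by (simp add: reduced_finv)
next
  case (eng h1 h2)
  have rh: "reduced h1" "reduced h2"
    using eng.hyps F.generate_in_carrier[OF NC_sub] by auto
  show ?case using eng.IH(1)[OF eng.prems] eng.IH(2)[of "fmult r2 h1"] rh eng.prems
    by (simp add: fmult_assoc AC_trans)
qed

lemma NC_normal: "NC r \<lhd> free_group"
  unfolding NC_def
proof (rule F.normal_generateI[OF NC_sub])
  fix h g assume "h \<in> {cj g r |g. reduced g}" "g \<in> carrier free_group"
  then obtain g' where "reduced g'" "h = cj g' r" "reduced g" by auto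
  then show "g \<otimes>\<^bsub>free_group\<^esub> h \<otimes>\<^bsub>free_group\<^esub> inv\<^bsub>free_group\<^esub> g \<in> {cj g r |g. reduced g}"
    by (auto simp: cj_def fmult_assoc finv_fmult reduced_finv intro!: exI[of _ "fmult g' (finv g)"])
qed

lemma r1_in_NC: "reduced r \<Longrightarrow> r \<in> NC r"
  unfolding NC_def by (rule generate.incl) (auto intro!: exI[of _ "[]"] simp: cj_def)

lemma mod_step:
  assumes r: "reduced r1" "reduced r2" "reduced r2'" "reduced g"
    and t: "t = cj g r2 \<or> t = cj g (finv r2)"
    and H: "\<And>(G :: letter list set monoid) h. group G \<Longrightarrow> h \<in> hom free_group G \<Longrightarrow>
               h r1 = \<one>\<^bsub>G\<^esub> \<Longrightarrow> h r2' = h t"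
  shows "AC_equiv (r1, r2) (r1, r2')"
proof -
  let ?N = "NC r1"
  interpret N: normal ?N free_group by (rule NC_normal)
  have grp: "group (free_group Mod ?N)" by (rule N.factorgroup_is_group)
  have hom: "(\<lambda>a. ?N #>\<^bsub>free_group\<^esub> a) \<in> hom free_group (free_group Mod ?N)"
    by (rule N.r_coset_hom_Mod)
  have rt: "reduced t" using t by auto
  have "?N #>\<^bsub>free_group\<^esub> r1 = ?N"
    using N.rcos_const[OF F.is_group r1_in_NC[OF r(1)]] .
  then have "?N #>\<^bsub>free_group\<^esub> r2' = ?N #>\<^bsub>free_group\<^esub> t"
    using H[OF grp hom] by simp
  moreover have "r2' \<in> ?N #>\<^bsub>free_group\<^esub> r2'"
    using F.rcos_self[OF _ N.subgroup_axioms] r by simp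
  ultimately obtain k where k: "k \<in> ?N" "r2' = fmult k t"
    unfolding r_coset_def by auto
  have rk: "reduced k" using k NC_reduced by simp
  have ck: "cj t k \<in> ?N"
    using N.inv_op_closed1[of t k] k rt rk by (simp add: cj_def reduced_finv fmult_assoc)
  have "AC_equiv (r1, t) (r1, fmult t (cj t k))"
    by (rule NC_AC[OF r(1) ck rt])
  moreover have "fmult t (cj t k) = r2'"
    using k rt rk by (simp add: cj_def fmult_cancel2)
  moreover have "AC_equiv (r1, r2) (r1, t)"
    using t
  proof
    assume "t = cj g r2" then show ?thesis using r by (intro AC_one[OF mv_conj2]) auto
  next
    assume "t = cj g (finv r2)" then show ?thesis using r
      apply -
      apply (rule AC_step[OF mv_inv2[OF refl]])
      by (rule AC_one[OF mv_conj2]) auto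
  qed
  ultimately show ?thesis by (metis AC_trans)
qed

lemma mod_step1:
  assumes r: "reduced r1" "reduced r2" "reduced r1'" "reduced g"
    and t: "t = cj g r1 \<or> t = cj g (finv r1)"
    and H: "\<And>(G :: letter list set monoid) h. group G \<Longrightarrow> h \<in> hom free_group G \<Longrightarrow>
               h r2 = \<one>\<^bsub>G\<^esub> \<Longrightarrow> h r1' = h t"
  shows "AC_equiv (r1, r2) (r1', r2)"
  using AC_swap[OF mod_step[OF r(2,1,3,4) t H]] by simp



definition R1e :: "('c,'d) monoid_scheme \<Rightarrow> 'c \<Rightarrow> 'c \<Rightarrow> 'c" where
  "R1e G a b = a \<otimes>\<^bsub>G\<^esub> b \<otimes>\<^bsub>G\<^esub> a \<otimes>\<^bsub>G\<^esub> inv\<^bsub>G\<^esub> b \<otimes>\<^bsub>G\<^esub> inv\<^bsub>G\<^esub> a \<otimes>\<^bsub>G\<^esub> inv\<^bsub>G\<^esub> b"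
definition R2e :: "('c,'d) monoid_scheme \<Rightarrow> nat \<Rightarrow> 'c \<Rightarrow> 'c \<Rightarrow> 'c" where
  "R2e G n a b = a [^]\<^bsub>G\<^esub> (int n) \<otimes>\<^bsub>G\<^esub> b [^]\<^bsub>G\<^esub> (- int n - 1)"
definition Se :: "('c,'d) monoid_scheme \<Rightarrow> nat \<Rightarrow> 'c \<Rightarrow> 'c \<Rightarrow> 'c" where
  "Se G n a b = b [^]\<^bsub>G\<^esub> (- int n - 2) \<otimes>\<^bsub>G\<^esub> inv\<^bsub>G\<^esub> a \<otimes>\<^bsub>G\<^esub> b [^]\<^bsub>G\<^esub> (int n - 1)
     \<otimes>\<^bsub>G\<^esub> a \<otimes>\<^bsub>G\<^esub> b \<otimes>\<^bsub>G\<^esub> a"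
definition Te :: "('c,'d) monoid_scheme \<Rightarrow> nat \<Rightarrow> 'c \<Rightarrow> 'c \<Rightarrow> 'c" where
  "Te G n a b = b [^]\<^bsub>G\<^esub> (- int n - 1) \<otimes>\<^bsub>G\<^esub> inv\<^bsub>G\<^esub> a \<otimes>\<^bsub>G\<^esub> b [^]\<^bsub>G\<^esub> (int n) \<otimes>\<^bsub>G\<^esub> a"
definition Ue :: "('c,'d) monoid_scheme \<Rightarrow> nat \<Rightarrow> 'c \<Rightarrow> 'c \<Rightarrow> 'c" where
  "Ue G n a b = b [^]\<^bsub>G\<^esub> (1 - int n) \<otimes>\<^bsub>G\<^esub> a \<otimes>\<^bsub>G\<^esub> inv\<^bsub>G\<^esub> b \<otimes>\<^bsub>G\<^esub> inv\<^bsub>G\<^esub> a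
     \<otimes>\<^bsub>G\<^esub> b [^]\<^bsub>G\<^esub> (int n - 1) \<otimes>\<^bsub>G\<^esub> a"

context group
begin

lemma pw_comb: "b \<in> carrier G \<Longrightarrow> z \<in> carrier G \<Longrightarrow> b [^] (i::int) \<otimes> (b [^] (j::int) \<otimes> z) = b [^] (i + j) \<otimes> z"
  by (simp add: int_pow_mult m_assoc)

lemma pw_comb1: "b \<in> carrier G \<Longrightarrow> z \<in> carrier G \<Longrightarrow> b [^] (i::int) \<otimes> (b \<otimes> z) = b [^] (i + 1) \<otimes> z"
  using pw_comb[of b z i 1] by simp

lemma pw_comb1': "b \<in> carrier G \<Longrightarrow> z \<in> carrier G \<Longrightarrow> b \<otimes> (b [^] (i::int) \<otimes> z) = b [^] (1 + i) \<otimes> z"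
  using pw_comb[of b z 1 i] by simp

lemma pw_combinv: "b \<in> carrier G \<Longrightarrow> z \<in> carrier G \<Longrightarrow> b [^] (i::int) \<otimes> (inv b \<otimes> z) = b [^] (i - 1) \<otimes> z"
  using pw_comb[of b z i "-1"] by (simp add: int_pow_neg)

lemma pw_combinv': "b \<in> carrier G \<Longrightarrow> z \<in> carrier G \<Longrightarrow> inv b \<otimes> (b [^] (i::int) \<otimes> z) = b [^] (i - 1) \<otimes> z"
  using pw_comb[of b z "-1" i] by (simp add: int_pow_neg)

lemma braid_R1:
  assumes ab: "a \<in> carrier G" "b \<in> carrier G" and R: "R1e G a b = \<one>"
    and that: "z \<in> carrier G"
  shows "a \<otimes> (b \<otimes> (a \<otimes> z)) = b \<otimes> (a \<otimes> (b \<otimes> z))"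
proof -
  have "(a \<otimes> b \<otimes> a) \<otimes> (inv b \<otimes> inv a \<otimes> inv b) = \<one>"
    using R ab by (simp add: R1e_def m_assoc)
  then have "inv (inv b \<otimes> inv a \<otimes> inv b) = a \<otimes> b \<otimes> a"
    by (rule inv_equality) (use ab in auto)
  moreover have "inv (inv b \<otimes> inv a \<otimes> inv b) = b \<otimes> a \<otimes> b"
    using ab by (simp add: inv_mult_group m_assoc)
  ultimately have "a \<otimes> b \<otimes> a = b \<otimes> a \<otimes> b" by simp
  then show ?thesis using that ab by (metis m_assoc m_closed)
qed

lemma braid_pow:
  assumes ab: "a \<in> carrier G" "b \<in> carrier G"
    and br: "\<And>z. z \<in> carrier G \<Longrightarrow> a \<otimes> (b \<otimes> (a \<otimes> z)) = b \<otimes> (a \<otimes> (b \<otimes> z))"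
  shows "z \<in> carrier G \<Longrightarrow> b [^] (k::nat) \<otimes> (a \<otimes> (b \<otimes> z)) = a \<otimes> (b \<otimes> (a [^] k \<otimes> z))"
proof (induction k arbitrary: z)
  case 0 then show ?case using ab by simp
next
  case (Suc k)
  have "b [^] Suc k \<otimes> (a \<otimes> (b \<otimes> z)) = b \<otimes> (b [^] k \<otimes> (a \<otimes> (b \<otimes> z)))"
    using ab Suc.prems by (subst nat_pow_Suc2) (simp_all add: m_assoc)
  also have "\<dots> = b \<otimes> (a \<otimes> (b \<otimes> (a [^] k \<otimes> z)))" using Suc by simp
  also have "\<dots> = a \<otimes> (b \<otimes> (a \<otimes> (a [^] k \<otimes> z)))" using br[of "a [^] k \<otimes> z"] ab Suc.prems by simp
  also have "\<dots> = a \<otimes> (b \<otimes> (a [^] Suc k \<otimes> z))" using ab Suc.prems by (subst nat_pow_Suc2) (simp_all add: m_assoc)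
  finally show ?case .
qed

lemma canc1: "x \<in> carrier G \<Longrightarrow> z \<in> carrier G \<Longrightarrow> inv x \<otimes> (x \<otimes> z) = z"
  by (simp add: m_assoc[symmetric])
lemma canc2: "x \<in> carrier G \<Longrightarrow> z \<in> carrier G \<Longrightarrow> x \<otimes> (inv x \<otimes> z) = z"
  by (simp add: m_assoc[symmetric])
lemma inv_pw: "x \<in> carrier G \<Longrightarrow> inv (x [^] (i::int)) = x [^] (- i)"
  by (simp add: int_pow_neg)
lemma pw_comb0: "b \<in> carrier G \<Longrightarrow> b [^] (i::int) \<otimes> b [^] (j::int) = b [^] (i + j)"
  by (simp add: int_pow_mult)
lemma pw_comb0a: "b \<in> carrier G \<Longrightarrow> b [^] (i::int) \<otimes> b = b [^] (i + 1)"
  using pw_comb0[of b i 1] by simp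
lemma pw_comb0b: "b \<in> carrier G \<Longrightarrow> b \<otimes> b [^] (i::int) = b [^] (1 + i)"
  using pw_comb0[of b 1 i] by simp
lemma pw_comb0c: "b \<in> carrier G \<Longrightarrow> b [^] (i::int) \<otimes> inv b = b [^] (i - 1)"
  using pw_comb0[of b i "-1"] by (simp add: int_pow_neg)
lemma pw_comb0d: "b \<in> carrier G \<Longrightarrow> inv b \<otimes> b [^] (i::int) = b [^] (i - 1)"
  using pw_comb0[of b "-1" i] by (simp add: int_pow_neg)

lemma int_pow_m1: "x \<in> carrier G \<Longrightarrow> x [^] (-1::int) = inv x"
  by (simp add: int_pow_neg)

lemmas gsimps = int_pow_m1 m_assoc canc1 canc2 inv_pw pw_comb pw_comb1 pw_comb1' pw_combinv pw_combinv'
  pw_comb0 pw_comb0a pw_comb0b pw_comb0c pw_comb0d inv_mult_group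

lemma pw_cong: "i = j \<Longrightarrow> b [^] (i::int) = b [^] j" by simp
lemma mcong: "x = x' \<Longrightarrow> y = y' \<Longrightarrow> x \<otimes> y = x' \<otimes> y'" by simp

lemma solve1: "x \<in> carrier G \<Longrightarrow> y \<in> carrier G \<Longrightarrow> x \<otimes> y = \<one> \<Longrightarrow> y = inv x"
  by (metis inv_equality inv_inv m_closed r_inv inv_closed)

lemma L1:
  assumes ab: "a \<in> carrier G" "b \<in> carrier G" and R: "R1e G a b = \<one>"
  shows "Se G n a b = inv (b [^] (int n + 1)) \<otimes> R2e G n a b \<otimes> b [^] (int n + 1)"
proof -
  have br: "\<And>z. z \<in> carrier G \<Longrightarrow> a \<otimes> (b \<otimes> (a \<otimes> z)) = b \<otimes> (a \<otimes> (b \<otimes> z))"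
    using braid_R1[OF ab R] .
  have bp: "b [^] (int n) \<otimes> (a \<otimes> (b \<otimes> a [^] (int n))) = a \<otimes> (b \<otimes> (a [^] (int n) \<otimes> a [^] (int n)))"
    using braid_pow[OF ab br, of "a [^] (int n)" n] ab by (simp add: int_pow_int)
  have "Se G n a b = b [^] (- int n - 2) \<otimes> (inv a \<otimes> (b [^] (int n - 1) \<otimes> (a \<otimes> (b \<otimes> a))))"
    using ab by (simp add: Se_def m_assoc)
  also have "\<dots> = b [^] (- int n - 2) \<otimes> (inv a \<otimes> (b [^] (int n - 1) \<otimes> (b \<otimes> (a \<otimes> b))))"
    using br[of "\<one>"] ab by simp
  also have "\<dots> = b [^] (- int n - 2) \<otimes> (inv a \<otimes> (b [^] (int n) \<otimes> (a \<otimes> b)))"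
    using ab by (simp add: gsimps)
  also have "b [^] (int n) \<otimes> (a \<otimes> b) = a \<otimes> (b \<otimes> a [^] (int n))"
    using braid_pow[OF ab br, of "\<one>" n] ab by (simp add: int_pow_int)
  also have "b [^] (- int n - 2) \<otimes> (inv a \<otimes> (a \<otimes> (b \<otimes> a [^] (int n)))) = b [^] (- int n - 1) \<otimes> a [^] (int n)"
    using ab by (simp add: gsimps, (intro refl mcong pw_cong; arith)?)
  also have "\<dots> = inv (b [^] (int n + 1)) \<otimes> R2e G n a b \<otimes> b [^] (int n + 1)"
    using ab by (simp add: gsimps R2e_def, (intro refl mcong pw_cong; arith)?)
  finally show ?thesis .
qed

lemma solve2: "x \<in> carrier G \<Longrightarrow> y \<in> carrier G \<Longrightarrow> z \<in> carrier G \<Longrightarrow> x \<otimes> (y \<otimes> z) = \<one> \<Longrightarrow> y = inv x \<otimes> inv z"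
proof -
  assume xyz: "x \<in> carrier G" "y \<in> carrier G" "z \<in> carrier G" "x \<otimes> (y \<otimes> z) = \<one>"
  then have "y \<otimes> z = inv x" using solve1[of x "y \<otimes> z"] by simp
  then have "y \<otimes> z \<otimes> inv z = inv x \<otimes> inv z" by simp
  then show ?thesis using xyz by (simp add: m_assoc)
qed

lemma L2:
  assumes ab: "a \<in> carrier G" "b \<in> carrier G" and S: "Se G n a b = \<one>"
  shows "Te G n a b = inv (a \<otimes> b \<otimes> a \<otimes> inv b) \<otimes> inv (R1e G a b) \<otimes> (a \<otimes> b \<otimes> a \<otimes> inv b)"
proof -
  define P0 where "P0 = inv a \<otimes> (b [^] (int n - 1) \<otimes> a)"
  have P0c: "P0 \<in> carrier G" using ab by (simp add: P0_def)
  have "b [^] (- int n - 2) \<otimes> (P0 \<otimes> (b \<otimes> a)) = \<one>"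
    using S ab by (simp add: Se_def m_assoc P0_def)
  then have P: "P0 = inv (b [^] (- int n - 2)) \<otimes> inv (b \<otimes> a)"
    using solve2[of "b [^] (- int n - 2)" P0 "b \<otimes> a"] ab P0c by simp
  have e: "inv a \<otimes> (b [^] (int n) \<otimes> a) = P0 \<otimes> (inv a \<otimes> (b \<otimes> a))"
    using ab by (simp add: P0_def gsimps)
  have "Te G n a b = b [^] (- int n - 1) \<otimes> (inv a \<otimes> (b [^] (int n) \<otimes> a))"
    using ab by (simp add: Te_def m_assoc)
  also have "\<dots> = b [^] (- int n - 1) \<otimes> (P0 \<otimes> (inv a \<otimes> (b \<otimes> a)))"
    by (simp add: e)
  also have "\<dots> = b \<otimes> (inv a \<otimes> (inv b \<otimes> (inv a \<otimes> (b \<otimes> a))))"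
    unfolding P using ab by (simp add: gsimps, (intro refl mcong pw_cong; arith)?)
  also have "\<dots> = inv (a \<otimes> b \<otimes> a \<otimes> inv b) \<otimes> inv (R1e G a b) \<otimes> (a \<otimes> b \<otimes> a \<otimes> inv b)"
    using ab by (simp add: gsimps R1e_def)
  finally show ?thesis .
qed

lemma L3:
  assumes ab: "a \<in> carrier G" "b \<in> carrier G" and T: "Te G n a b = \<one>"
  shows "Ue G n a b = inv (b [^] (- int n - 1) \<otimes> inv a \<otimes> b [^] (int n - 1)) \<otimes> Se G n a b
           \<otimes> (b [^] (- int n - 1) \<otimes> inv a \<otimes> b [^] (int n - 1))"
proof -
  have "b [^] (- int n - 1) \<otimes> (inv a \<otimes> (b [^] (int n) \<otimes> a)) = \<one>"
    using T ab by (simp add: Te_def m_assoc)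
  then have t1: "inv a \<otimes> (b [^] (int n) \<otimes> a) = b [^] (int n + 1)"
    using solve1[of "b [^] (- int n - 1)" "inv a \<otimes> (b [^] (int n) \<otimes> a)"] ab
    by (simp add: gsimps, (intro refl mcong pw_cong; arith)?)
  have l: "a \<otimes> (inv a \<otimes> (b [^] (int n) \<otimes> a)) \<otimes> inv a = b [^] (int n)"
    using ab by (simp add: m_assoc canc1 canc2)
  have "b [^] (int n) = a \<otimes> b [^] (int n + 1) \<otimes> inv a"
    using l[unfolded t1] by simp
  then have "inv (b [^] (int n)) = inv (a \<otimes> b [^] (int n + 1) \<otimes> inv a)" by simp
  then have t2: "b [^] (- int n) = a \<otimes> (b [^] (- int n - 1) \<otimes> inv a)"
    using ab by (simp add: gsimps, (intro refl mcong pw_cong; arith)?)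
  have t2': "a \<otimes> (b [^] (- int n - 1) \<otimes> (inv a \<otimes> z)) = b [^] (- int n) \<otimes> z" if "z \<in> carrier G" for z
    using that ab by (simp add: t2 m_assoc[symmetric])
  have "inv (b [^] (- int n - 1) \<otimes> inv a \<otimes> b [^] (int n - 1)) \<otimes> Se G n a b
           \<otimes> (b [^] (- int n - 1) \<otimes> inv a \<otimes> b [^] (int n - 1))
        = b [^] (1 - int n) \<otimes> (a \<otimes> (inv b \<otimes> (inv a \<otimes> (b [^] (int n - 1) \<otimes> (a \<otimes> (b \<otimes> 
           (a \<otimes> (b [^] (- int n - 1) \<otimes> (inv a \<otimes> b [^] (int n - 1))))))))))"
    using ab by (simp add: gsimps Se_def, (intro refl mcong pw_cong; arith)?)
  also have "\<dots> = b [^] (1 - int n) \<otimes> (a \<otimes> (inv b \<otimes> (inv a \<otimes> (b [^] (int n - 1) \<otimes> (a \<otimes> (b \<otimes> 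
           (b [^] (- int n) \<otimes> b [^] (int n - 1))))))))"
    using ab by (simp add: t2')
  also have "\<dots> = Ue G n a b"
    using ab by (simp add: gsimps Ue_def, (intro refl mcong pw_cong; arith)?)
  finally show ?thesis by simp
qed

lemma L4:
  assumes ab: "a \<in> carrier G" "b \<in> carrier G" and U: "Ue G n a b = \<one>"
  shows "R1e G (a \<otimes> b) b = inv (inv a \<otimes> b [^] (- int n)) \<otimes> inv (Te G n a b) \<otimes> (inv a \<otimes> b [^] (- int n))"
proof -
  have "b [^] (1 - int n) \<otimes> ((a \<otimes> (inv b \<otimes> inv a)) \<otimes> (b [^] (int n - 1) \<otimes> a)) = \<one>"
    using U ab by (simp add: Ue_def m_assoc)
  then have u1: "a \<otimes> (inv b \<otimes> inv a) = inv (b [^] (1 - int n)) \<otimes> inv (b [^] (int n - 1) \<otimes> a)"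
    using solve2[of "b [^] (1 - int n)" "a \<otimes> (inv b \<otimes> inv a)" "b [^] (int n - 1) \<otimes> a"] ab by simp
  have u2: "a \<otimes> (inv b \<otimes> (inv a \<otimes> z)) = b [^] (int n - 1) \<otimes> (inv a \<otimes> (b [^] (1 - int n) \<otimes> z))"
    if "z \<in> carrier G" for z
  proof -
    have "a \<otimes> (inv b \<otimes> (inv a \<otimes> z)) = (a \<otimes> (inv b \<otimes> inv a)) \<otimes> z" using ab that by (simp add: m_assoc)
    also have "\<dots> = b [^] (int n - 1) \<otimes> (inv a \<otimes> (b [^] (1 - int n) \<otimes> z))"
      unfolding u1 using ab that by (simp add: gsimps, (intro refl mcong pw_cong; arith)?)
    finally show ?thesis .
  qed
  have "R1e G (a \<otimes> b) b = a \<otimes> (b \<otimes> (b \<otimes> (a \<otimes> (inv b \<otimes> (inv a \<otimes> inv b)))))"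
    using ab by (simp add: R1e_def gsimps)
  also have "\<dots> = a \<otimes> (b \<otimes> (b \<otimes> (b [^] (int n - 1) \<otimes> (inv a \<otimes> (b [^] (1 - int n) \<otimes> inv b)))))"
    using ab by (simp add: u2)
  also have "\<dots> = inv (inv a \<otimes> b [^] (- int n)) \<otimes> inv (Te G n a b) \<otimes> (inv a \<otimes> b [^] (- int n))"
    using ab by (simp add: gsimps Te_def, (intro refl mcong pw_cong; arith)?)
  finally show ?thesis .
qed

lemma L5:
  assumes ab: "a \<in> carrier G" "b \<in> carrier G" and Q: "R1e G (a \<otimes> b) b = \<one>" and n: "n \<ge> 1"
  shows "R2e G n (a \<otimes> b) b = inv (b [^] (1 - int n)) \<otimes> Ue G n a b \<otimes> b [^] (1 - int n)"
proof -
  define A where "A = a \<otimes> b"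
  have Ac: "A \<in> carrier G" using ab by (simp add: A_def)
  have br: "\<And>z. z \<in> carrier G \<Longrightarrow> A \<otimes> (b \<otimes> (A \<otimes> z)) = b \<otimes> (A \<otimes> (b \<otimes> z))"
    using braid_R1[OF Ac ab(2)] Q by (simp add: A_def)
  have bp: "b [^] (n - 1) \<otimes> (A \<otimes> (b \<otimes> z)) = A \<otimes> (b \<otimes> (A [^] (n - 1) \<otimes> z))" if "z \<in> carrier G" for z
    using braid_pow[OF Ac ab(2) br that] .
  have i1: "int (n - 1) = int n - 1" using n by simp
  have bp': "b [^] (int n - 1) \<otimes> (a \<otimes> (b \<otimes> (b \<otimes> z))) = a \<otimes> (b \<otimes> (b \<otimes> (A [^] (int n - 1) \<otimes> z)))"
    if "z \<in> carrier G" for z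
    using bp[OF that] ab that Ac unfolding int_pow_int[symmetric] i1 by (simp add: A_def m_assoc)
  have "inv (b [^] (1 - int n)) \<otimes> Ue G n a b \<otimes> b [^] (1 - int n)
       = a \<otimes> (inv b \<otimes> (inv a \<otimes> (b [^] (int n - 1) \<otimes> (a \<otimes> (b \<otimes> (b \<otimes> b [^] (- int n - 1)))))))"
    using ab by (simp add: gsimps Ue_def, (intro refl mcong pw_cong; arith)?)
  also have "\<dots> = a \<otimes> (b \<otimes> (A [^] (int n - 1) \<otimes> b [^] (- int n - 1)))"
    using ab Ac by (simp add: bp' canc1 canc2)
  also have "\<dots> = R2e G n (a \<otimes> b) b"
  proof -
    have "A [^] int n = A \<otimes> A [^] (int n - 1)" using pw_comb0b[OF Ac, of "int n - 1"] by simp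
    then show ?thesis using ab Ac by (simp add: R2e_def A_def[symmetric] m_assoc) (simp add: A_def m_assoc)
  qed
  finally show ?thesis by simp
qed

lemma conj_pow_nat:
  assumes c: "d \<in> carrier G" "x \<in> carrier G" "y \<in> carrier G" and e: "d \<otimes> x = y \<otimes> d"
  shows "d \<otimes> x [^] (k::nat) = y [^] k \<otimes> d"
proof (induction k)
  case (Suc k)
  have "d \<otimes> x [^] Suc k = (d \<otimes> x [^] k) \<otimes> x" using c by (simp add: m_assoc)
  also have "\<dots> = y [^] k \<otimes> (d \<otimes> x)" using Suc c by (simp add: m_assoc)
  also have "\<dots> = y [^] Suc k \<otimes> d" using e c by (simp add: m_assoc)
  finally show ?case .
qed (use c in simp)

lemma conj_pow:
  assumes c: "d \<in> carrier G" "x \<in> carrier G" "y \<in> carrier G" and e: "d \<otimes> x = y \<otimes> d"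
  shows "d \<otimes> x [^] (i::int) = y [^] i \<otimes> d"
proof (cases "i \<ge> 0")
  case True
  then obtain k where "i = int k" by (metis nonneg_eq_int)
  then show ?thesis using conj_pow_nat[OF c e, of k] by (simp add: int_pow_int)
next
  case False
  then obtain k where k: "i = - int k" by (metis neg_0_le_iff_le nonneg_eq_int le_cases minus_minus)
  have h: "d \<otimes> x [^] k = y [^] k \<otimes> d" by (rule conj_pow_nat[OF c e])
  have "inv (y [^] k) \<otimes> (d \<otimes> x [^] k) \<otimes> inv (x [^] k) = inv (y [^] k) \<otimes> (y [^] k \<otimes> d) \<otimes> inv (x [^] k)"
    by (simp add: h)
  then have "d \<otimes> inv (x [^] k) = inv (y [^] k) \<otimes> d"
    using c by (simp add: m_assoc canc1 canc2)
  then show ?thesis using c k by (simp add: int_pow_neg int_pow_int)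
qed

lemma Lsig:
  assumes ab: "a \<in> carrier G" "b \<in> carrier G" and R: "R1e G a b = \<one>"
  shows "R2e G n b a = inv (inv (a \<otimes> b \<otimes> a)) \<otimes> R2e G n a b \<otimes> inv (a \<otimes> b \<otimes> a)"
proof -
  define D where "D = a \<otimes> b \<otimes> a"
  have Dc: "D \<in> carrier G" using ab by (simp add: D_def)
  have br: "\<And>z. z \<in> carrier G \<Longrightarrow> a \<otimes> (b \<otimes> (a \<otimes> z)) = b \<otimes> (a \<otimes> (b \<otimes> z))"
    using braid_R1[OF ab R] .
  have e1: "D \<otimes> a = b \<otimes> D" using br[of a] ab by (simp add: D_def m_assoc)
  have e2: "D \<otimes> b = a \<otimes> D" using br[of "\<one>", symmetric] ab by (simp add: D_def m_assoc)
  have "inv (inv D) \<otimes> R2e G n a b \<otimes> inv D = D \<otimes> a [^] int n \<otimes> b [^] (- int n - 1) \<otimes> inv D"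
    using ab Dc by (simp add: R2e_def m_assoc)
  also have "\<dots> = b [^] int n \<otimes> (D \<otimes> b [^] (- int n - 1)) \<otimes> inv D"
    using conj_pow[OF Dc ab(1,2) e1, of "int n"] ab Dc by (simp add: m_assoc)
  also have "\<dots> = b [^] int n \<otimes> a [^] (- int n - 1)"
    using conj_pow[OF Dc ab(2,1) e2, of "- int n - 1"] ab Dc by (simp add: m_assoc canc1 canc2)
  finally show ?thesis by (simp add: R2e_def D_def)
qed

end



lemma reduced_pow[simp]: "reduced x \<Longrightarrow> reduced (x [^]\<^bsub>free_group\<^esub> (i::int))"
  using F.int_pow_closed[of x i] by simp

declare reduced_finv[simp]

context
  fixes G' :: "('c, 'd) monoid_scheme" and h
  assumes grp: "group G'" and hh: "h \<in> hom free_group G'"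
begin

interpretation gh: group_hom free_group G' h
  using grp hh by (simp add: group_hom_def group_hom_axioms_def F.is_group)

lemma hom_fm: "reduced x \<Longrightarrow> reduced y \<Longrightarrow> h (fmult x y) = h x \<otimes>\<^bsub>G'\<^esub> h y"
  using gh.hom_mult by simp
lemma hom_fi: "reduced x \<Longrightarrow> h (finv x) = inv\<^bsub>G'\<^esub> (h x)"
  using gh.hom_inv by simp
lemma hom_fp: "reduced x \<Longrightarrow> h (x [^]\<^bsub>free_group\<^esub> (i::int)) = h x [^]\<^bsub>G'\<^esub> i"
  using gh.hom_int_pow by simp
lemma hom_fc: "reduced x \<Longrightarrow> h x \<in> carrier G'"
  using gh.hom_closed by simp
lemma hom_cj: "reduced g \<Longrightarrow> reduced w \<Longrightarrow> h (cj g w) = inv\<^bsub>G'\<^esub> (h g) \<otimes>\<^bsub>G'\<^esub> h w \<otimes>\<^bsub>G'\<^esub> h g"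
  by (simp add: cj_def hom_fm hom_fi gh.H.m_assoc hom_fc)

lemmas hom_ex = hom_fm hom_fi hom_fp hom_fc

lemma hom_R1e: "reduced a \<Longrightarrow> reduced b \<Longrightarrow> h (R1e free_group a b) = R1e G' (h a) (h b)"
  by (simp add: R1e_def hom_ex)
lemma hom_R2e: "reduced a \<Longrightarrow> reduced b \<Longrightarrow> h (R2e free_group n a b) = R2e G' n (h a) (h b)"
  by (simp add: R2e_def hom_ex)
lemma hom_Se: "reduced a \<Longrightarrow> reduced b \<Longrightarrow> h (Se free_group n a b) = Se G' n (h a) (h b)"
  by (simp add: Se_def hom_ex)
lemma hom_Te: "reduced a \<Longrightarrow> reduced b \<Longrightarrow> h (Te free_group n a b) = Te G' n (h a) (h b)"
  by (simp add: Te_def hom_ex)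
lemma hom_Ue: "reduced a \<Longrightarrow> reduced b \<Longrightarrow> h (Ue free_group n a b) = Ue G' n (h a) (h b)"
  by (simp add: Ue_def hom_ex)

end

lemma reduced_exprs[simp]:
  "reduced (R1e free_group a b)" "reduced (R2e free_group n a b)" "reduced (Se free_group n a b)"
  "reduced (Te free_group n a b)" "reduced (Ue free_group n a b)"
  by (simp_all add: R1e_def R2e_def Se_def Te_def Ue_def)

abbreviation "wX \<equiv> [gx]"
abbreviation "wY \<equiv> [gy]"

lemma rXY[simp]: "reduced wX" "reduced wY" by simp_all

lemma chain_nu:
  assumes n: "n \<ge> 1"
  shows "AC_equiv (R1e free_group wX wY, R2e free_group n wX wY)
                  (R1e free_group (fmult wX wY) wY, R2e free_group n (fmult wX wY) wY)"
proof -
  let ?F = free_group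
  let ?R1 = "R1e ?F wX wY" and ?R2 = "R2e ?F n wX wY" and ?S = "Se ?F n wX wY"
    and ?T = "Te ?F n wX wY" and ?U = "Ue ?F n wX wY"
    and ?Q1 = "R1e ?F (fmult wX wY) wY" and ?Q2 = "R2e ?F n (fmult wX wY) wY"
  have s1: "AC_equiv (?R1, ?R2) (?R1, ?S)"
  proof (rule mod_step[where g = "wY [^]\<^bsub>?F\<^esub> (int n + 1)", OF _ _ _ _ disjI1[OF refl]])
    fix G' :: "letter list set monoid" and h
    assume g: "group G'" and hh: "h \<in> hom free_group G'" and r: "h ?R1 = \<one>\<^bsub>G'\<^esub>"
    interpret G': group G' by (rule g)
    show "h ?S = h (cj (wY [^]\<^bsub>?F\<^esub> (int n + 1)) ?R2)"
      using G'.L1[OF hom_fc[OF g hh] hom_fc[OF g hh], of wX wY n] r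
      by (simp add: hom_cj[OF g hh] hom_R1e[OF g hh] hom_R2e[OF g hh] hom_Se[OF g hh] hom_fp[OF g hh])
  qed simp_all
  have s2: "AC_equiv (?R1, ?S) (?T, ?S)"
  proof (rule mod_step1[where g = "fmult (fmult (fmult wX wY) wX) (finv wY)", OF _ _ _ _ disjI2[OF refl]])
    fix G' :: "letter list set monoid" and h
    assume g: "group G'" and hh: "h \<in> hom free_group G'" and r: "h ?S = \<one>\<^bsub>G'\<^esub>"
    interpret G': group G' by (rule g)
    show "h ?T = h (cj (fmult (fmult (fmult wX wY) wX) (finv wY)) (finv ?R1))"
      using G'.L2[OF hom_fc[OF g hh] hom_fc[OF g hh], of wX wY n] r
      by (simp add: hom_cj[OF g hh] hom_R1e[OF g hh] hom_Te[OF g hh] hom_Se[OF g hh] hom_ex[OF g hh])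
  qed simp_all
  have s3: "AC_equiv (?T, ?S) (?T, ?U)"
  proof (rule mod_step[where g = "fmult (fmult (wY [^]\<^bsub>?F\<^esub> (- int n - 1)) (finv wX)) (wY [^]\<^bsub>?F\<^esub> (int n - 1))",
        OF _ _ _ _ disjI1[OF refl]])
    fix G' :: "letter list set monoid" and h
    assume g: "group G'" and hh: "h \<in> hom free_group G'" and r: "h ?T = \<one>\<^bsub>G'\<^esub>"
    interpret G': group G' by (rule g)
    show "h ?U = h (cj (fmult (fmult (wY [^]\<^bsub>?F\<^esub> (- int n - 1)) (finv wX)) (wY [^]\<^bsub>?F\<^esub> (int n - 1))) ?S)"
      using G'.L3[OF hom_fc[OF g hh] hom_fc[OF g hh], of wX wY n] r
      by (simp add: hom_cj[OF g hh] hom_Ue[OF g hh] hom_Te[OF g hh] hom_Se[OF g hh] hom_ex[OF g hh])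
  qed simp_all
  have s4: "AC_equiv (?T, ?U) (?Q1, ?U)"
  proof (rule mod_step1[where g = "fmult (finv wX) (wY [^]\<^bsub>?F\<^esub> (- int n))", OF _ _ _ _ disjI2[OF refl]])
    fix G' :: "letter list set monoid" and h
    assume g: "group G'" and hh: "h \<in> hom free_group G'" and r: "h ?U = \<one>\<^bsub>G'\<^esub>"
    interpret G': group G' by (rule g)
    show "h ?Q1 = h (cj (fmult (finv wX) (wY [^]\<^bsub>?F\<^esub> (- int n))) (finv ?T))"
      using G'.L4[OF hom_fc[OF g hh] hom_fc[OF g hh], of wX wY n] r
      by (simp add: hom_cj[OF g hh] hom_Ue[OF g hh] hom_Te[OF g hh] hom_R1e[OF g hh] hom_ex[OF g hh])
  qed simp_all
  have s5: "AC_equiv (?Q1, ?U) (?Q1, ?Q2)"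
  proof (rule mod_step[where g = "wY [^]\<^bsub>?F\<^esub> (1 - int n)", OF _ _ _ _ disjI1[OF refl]])
    fix G' :: "letter list set monoid" and h
    assume g: "group G'" and hh: "h \<in> hom free_group G'" and r: "h ?Q1 = \<one>\<^bsub>G'\<^esub>"
    interpret G': group G' by (rule g)
    show "h ?Q2 = h (cj (wY [^]\<^bsub>?F\<^esub> (1 - int n)) ?U)"
      using G'.L5[OF hom_fc[OF g hh] hom_fc[OF g hh], of wX wY n] r n
      by (simp add: hom_cj[OF g hh] hom_Ue[OF g hh] hom_R2e[OF g hh] hom_R1e[OF g hh] hom_ex[OF g hh])
  qed simp_all
  show ?thesis using s1 s2 s3 s4 s5 by (meson AC_trans)
qed

lemma chain_sigma:
  "AC_equiv (R1e free_group wX wY, R2e free_group n wX wY)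
                  (R1e free_group wY wX, R2e free_group n wY wX)"
proof -
  let ?F = free_group
  let ?R1 = "R1e ?F wX wY" and ?R2 = "R2e ?F n wX wY"
  let ?g = "finv (fmult (fmult wX wY) wX)"
  have s1: "AC_equiv (?R1, ?R2) (?R1, R2e ?F n wY wX)"
  proof (rule mod_step[where g = ?g, OF _ _ _ _ disjI1[OF refl]])
    fix G' :: "letter list set monoid" and h
    assume g: "group G'" and hh: "h \<in> hom free_group G'" and r: "h ?R1 = \<one>\<^bsub>G'\<^esub>"
    interpret G': group G' by (rule g)
    show "h (R2e ?F n wY wX) = h (cj ?g ?R2)"
      using G'.Lsig[OF hom_fc[OF g hh] hom_fc[OF g hh], of wX wY n] r
      by (simp add: hom_cj[OF g hh] hom_R1e[OF g hh] hom_R2e[OF g hh] hom_ex[OF g hh])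
  qed simp_all
  have "finv ?R1 = R1e ?F wY wX"
    by (simp add: R1e_def F.inv_mult_group[symmetric, simplified] finv_fmult fmult_assoc)
  then have s2: "AC_equiv (?R1, R2e ?F n wY wX) (R1e ?F wY wX, R2e ?F n wY wX)"
    by (intro AC_one mv_inv1) simp
  show ?thesis using s1 s2 by (meson AC_trans)
qed



lemma reduced_replicate[simp]: "reduced (replicate k a)"
  by (induction k) (auto simp: reduced_Cons)

lemma finv_replicate: "finv (replicate k a) = replicate k (inv_letter a)"
  by (simp add: finv_def)

lemma pow_replicate: "[a] [^]\<^bsub>free_group\<^esub> (k::nat) = replicate k a"
proof (induction k)
  case (Suc k)
  have "[a] [^]\<^bsub>free_group\<^esub> Suc k = [a] \<otimes>\<^bsub>free_group\<^esub> [a] [^]\<^bsub>free_group\<^esub> k"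
    by (rule F.nat_pow_Suc2) simp
  also have "\<dots> = a # replicate k a"
  proof -
    have "reduced (a # replicate k a)" using reduced_replicate[of "Suc k" a] by simp
    then show ?thesis using Suc by (simp add: fmult_single)
  qed
  finally show ?case by simp
qed simp

lemma AK_eq: "AK n = (R1e free_group wX wY, R2e free_group n wX wY)"
proof -
  have 1: "R1e free_group wX wY = [gx, gy, gx, inv_letter gy, inv_letter gx, inv_letter gy]"
    by (simp add: R1e_def fmult_def finv_def gx_def gy_def inv_letter_def)
  have "wY [^]\<^bsub>free_group\<^esub> (- int n - 1) = wY [^]\<^bsub>free_group\<^esub> (- int (Suc n))"
    by (rule arg_cong[where f = "\<lambda>i. wY [^]\<^bsub>free_group\<^esub> i"]) simp
  also have "\<dots> = inv\<^bsub>free_group\<^esub> (wY [^]\<^bsub>free_group\<^esub> (Suc n))"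
    by (rule F.int_pow_neg_int) simp
  also have "\<dots> = finv (replicate (Suc n) gy)"
    by (simp only: pow_replicate) (rule inv_F, rule reduced_replicate)
  finally have e: "wY [^]\<^bsub>free_group\<^esub> (- int n - 1) = replicate (Suc n) (inv_letter gy)"
    by (simp add: finv_def replicate_append_same del: replicate_Suc)
  have r: "reduced (replicate n gx @ replicate (Suc n) (inv_letter gy))"
    by (auto simp: reduced_append gx_def gy_def inv_letter_def last_replicate hd_replicate simp del: replicate_Suc)
  have 2: "R2e free_group n wX wY = replicate n gx @ replicate (n + 1) (inv_letter gy)"
    unfolding R2e_def using r
    by (simp add: int_pow_int pow_replicate e fmult_append del: replicate_Suc)
  show ?thesis using 1 2 by (simp add: AK_def)
qed

definition PP :: "nat \<Rightarrow> letter list \<Rightarrow> letter list \<Rightarrow> bool" where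
  "PP n u v \<longleftrightarrow> AC_equiv (sub u v (fst (AK n)), sub u v (snd (AK n))) (AK n)"

lemma img_gx[simp]: "img u v gx = u" and img_gy[simp]: "img u v gy = v"
  by (simp_all add: img_def gx_def gy_def)

lemma sub_X[simp]: "reduced u \<Longrightarrow> sub u v [gx] = u"
  and sub_Y[simp]: "reduced v \<Longrightarrow> sub u v [gy] = v"
  by (simp_all add: img_def gx_def gy_def)

lemma sub_AK: "reduced u \<Longrightarrow> reduced v \<Longrightarrow>
  (sub u v (fst (AK n)), sub u v (snd (AK n))) = (R1e free_group u v, R2e free_group n u v)"
  using hom_R1e[OF F.is_group sub_hom, of u v wX wY] hom_R2e[OF F.is_group sub_hom, of u v wX wY n]
  by (simp add: AK_eq)

lemma RP_AK: "RP (AK n)" by (simp add: AK_eq)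

lemma PP_step:
  assumes r: "reduced u" "reduced v" "reduced a" "reduced b"
    and G: "AC_equiv (AK n) (R1e free_group a b, R2e free_group n a b)"
  shows "PP n (sub u v a) (sub u v b) \<longleftrightarrow> PP n u v"
proof -
  have "AC_equiv (sub u v (fst (AK n)), sub u v (snd (AK n)))
                 (sub u v (R1e free_group a b), sub u v (R2e free_group n a b))"
    using AC_hom[OF sub_hom[OF r(1,2)] G RP_AK] by simp
  also have "(sub u v (R1e free_group a b), sub u v (R2e free_group n a b))
     = (sub (sub u v a) (sub u v b) (fst (AK n)), sub (sub u v a) (sub u v b) (snd (AK n)))"
    using sub_AK[of "sub u v a" "sub u v b" n] r
      hom_R1e[OF F.is_group sub_hom, of u v a b] hom_R2e[OF F.is_group sub_hom, of u v a b n]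
    by simp
  finally have E: "AC_equiv (sub u v (fst (AK n)), sub u v (snd (AK n)))
        (sub (sub u v a) (sub u v b) (fst (AK n)), sub (sub u v a) (sub u v b) (snd (AK n)))" .
  have rp: "RP (sub u v (fst (AK n)), sub u v (snd (AK n)))" by simp
  have rp2: "RP (sub (sub u v a) (sub u v b) (fst (AK n)), sub (sub u v a) (sub u v b) (snd (AK n)))" by simp
  show ?thesis unfolding PP_def
    using E AC_sym[OF E rp] by (meson AC_trans)
qed

lemma PP_swap: "reduced u \<Longrightarrow> reduced v \<Longrightarrow> PP n v u \<longleftrightarrow> PP n u v"
  using PP_step[of u v wY wX n] chain_sigma[of n] by (simp add: AK_eq)

lemma PP_nu: "n \<ge> 1 \<Longrightarrow> reduced u \<Longrightarrow> reduced v \<Longrightarrow> PP n (fmult u v) v \<longleftrightarrow> PP n u v"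
  using PP_step[of u v "fmult wX wY" wY n] chain_nu[of n] by (simp add: AK_eq sub_fmult)

lemma PP_cj: "reduced g \<Longrightarrow> reduced u \<Longrightarrow> reduced v \<Longrightarrow> PP n (cj g u) (cj g v) \<longleftrightarrow> PP n u v"
proof -
  assume r: "reduced g" "reduced u" "reduced v"
  let ?p = "(sub u v (fst (AK n)), sub u v (snd (AK n)))"
  let ?q = "(sub (cj g u) (cj g v) (fst (AK n)), sub (cj g u) (cj g v) (snd (AK n)))"
  have q: "?q = (cj g (fst ?p), cj g (snd ?p))" using r by (simp add: sub_cj)
  have E: "AC_equiv ?p ?q" unfolding q prod.sel
    by (rule AC_step[OF mv_conj1[OF r(1) refl]], rule AC_one[OF mv_conj2[OF r(1) refl]])
  show ?thesis unfolding PP_def using E AC_sym[OF E] by (meson AC_trans RP_simp reduced_sub)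
qed

lemma PP_nuinv: "n \<ge> 1 \<Longrightarrow> reduced u \<Longrightarrow> reduced v \<Longrightarrow> PP n (fmult u (finv v)) v \<longleftrightarrow> PP n u v"
  using PP_nu[of n "fmult u (finv v)" v] by (simp add: fmult_assoc fmult_finv1)

lemma PP_inv: 
  assumes n: "n \<ge> 1" and r: "reduced u" "reduced v"
  shows "PP n (finv u) v \<longleftrightarrow> PP n u v"
proof -
  let ?w = "fmult u v"
  have "PP n u v \<longleftrightarrow> PP n ?w v" using PP_nu[OF n r] by simp
  also have "\<dots> \<longleftrightarrow> PP n v ?w" using PP_swap r by simp
  also have "\<dots> \<longleftrightarrow> PP n (fmult v (finv ?w)) ?w" using PP_nuinv[OF n, of v ?w] r by simp
  also have "fmult v (finv ?w) = finv u" using r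
    by (simp add: finv_fmult fmult_assoc[symmetric] fmult_finv2)
  also have "PP n (finv u) ?w \<longleftrightarrow> PP n ?w (finv u)" using PP_swap r by simp
  also have "\<dots> \<longleftrightarrow> PP n (fmult ?w (finv u)) (finv u)" using PP_nu[OF n, of ?w "finv u"] r by simp
  also have "\<dots> \<longleftrightarrow> PP n (cj u (fmult ?w (finv u))) (cj u (finv u))" using PP_cj[of u] r by simp
  also have "cj u (fmult ?w (finv u)) = v" using r
    by (simp add: cj_def fmult_assoc fmult_finv2 fmult_finv1 fmult_cancel1)
  also have "cj u (finv u) = finv u" using r
    by (simp add: cj_def fmult_assoc fmult_finv2 fmult_finv1 fmult_cancel1)
  also have "PP n v (finv u) \<longleftrightarrow> PP n (finv u) v" using PP_swap r by simp
  finally show ?thesis by simp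
qed



inductive mv :: "letter list \<times> letter list \<Rightarrow> letter list \<times> letter list \<Rightarrow> bool" where
  sw: "mv (u, v) (v, u)"
| nu: "mv (u, v) (fmult u v, v)"
| iv: "mv (u, v) (finv u, v)"
| cjm: "reduced g \<Longrightarrow> mv (u, v) (cj g u, cj g v)"

lemma mv_RP: "mv p q \<Longrightarrow> RP p \<Longrightarrow> RP q"
  by (induction rule: mv.induct) auto

lemma mv_PP: "mv p q \<Longrightarrow> n \<ge> 1 \<Longrightarrow> RP p \<Longrightarrow> PP n (fst q) (snd q) \<Longrightarrow> PP n (fst p) (snd p)"
proof (induction rule: mv.induct)
  case (sw u v) then show ?case using PP_swap[of u v n] by simp
next
  case (nu u v) then show ?case using PP_nu[of n u v] by simp
next
  case (iv u v) then show ?case using PP_inv[of n u v] by simp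
next
  case (cjm g u v) then show ?case using PP_cj[of g u v n] by simp
qed

lemma mvs_RP: "mv\<^sup>*\<^sup>* p q \<Longrightarrow> RP p \<Longrightarrow> RP q"
  by (induction rule: rtranclp_induct) (auto dest: mv_RP)

lemma mvs_PP: "mv\<^sup>*\<^sup>* p q \<Longrightarrow> n \<ge> 1 \<Longrightarrow> RP p \<Longrightarrow> PP n (fst q) (snd q) \<Longrightarrow> PP n (fst p) (snd p)"
proof (induction rule: converse_rtranclp_induct)
  case (step y z)
  have "RP z" using mv_RP[OF step.hyps(1) step.prems(2)] .
  then have "PP n (fst z) (snd z)" using step.IH step.prems by simp
  then show ?case using mv_PP[OF step.hyps(1) step.prems(1,2)] by simp
qed simp

definition Basis :: "letter list \<Rightarrow> letter list \<Rightarrow> bool" where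
  "Basis u v \<longleftrightarrow> reduced u \<and> reduced v \<and> bij_betw (sub u v) RW RW"

lemma Basis_init:
  assumes "\<phi> \<in> Aut_F"
  shows "Basis (\<phi> wX) (\<phi> wY)"
proof -
  have h: "\<phi> \<in> hom free_group free_group" and b: "bij_betw \<phi> RW RW"
    using assms by (auto simp: Aut_F_def iso_def RW_def)
  have r: "reduced (\<phi> wX)" "reduced (\<phi> wY)" using hom_props(3)[OF h] by auto
  have "\<And>w. w \<in> RW \<Longrightarrow> sub (\<phi> wX) (\<phi> wY) w = \<phi> w"
    by (rule hom_sub_eq[OF h, symmetric]) (simp add: RW_def)
  then have "bij_betw (sub (\<phi> wX) (\<phi> wY)) RW RW = bij_betw \<phi> RW RW"
    by (rule bij_betw_cong)
  then have "bij_betw (sub (\<phi> wX) (\<phi> wY)) RW RW" using b by simp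
  then show ?thesis using r by (simp add: Basis_def)
qed

lemma bij_sub:
  assumes r: "reduced a" "reduced b" "reduced c" "reduced d"
    and e: "sub c d a = wX" "sub c d b = wY" "sub a b c = wX" "sub a b d = wY"
  shows "bij_betw (sub a b) RW RW"
  by (rule bij_betw_byWitness[where f' = "sub c d"])
     (use r e in \<open>auto simp: RW_def sub_comp sub_id\<close>)

lemma Basis_comp:
  assumes B: "Basis u v" and r: "reduced a" "reduced b" "reduced c" "reduced d"
    and e: "sub c d a = wX" "sub c d b = wY" "sub a b c = wX" "sub a b d = wY"
  shows "Basis (sub u v a) (sub u v b)"
proof -
  have ru: "reduced u" "reduced v" and bu: "bij_betw (sub u v) RW RW" using B by (auto simp: Basis_def)
  have "bij_betw (sub u v \<circ> sub a b) RW RW"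
    by (rule bij_betw_trans[OF bij_sub[OF r e] bu])
  moreover have "bij_betw (sub (sub u v a) (sub u v b)) RW RW = bij_betw (sub u v \<circ> sub a b) RW RW"
    by (rule bij_betw_cong) (use ru r in \<open>simp add: RW_def sub_comp\<close>)
  ultimately have "bij_betw (sub (sub u v a) (sub u v b)) RW RW" by simp
  then show ?thesis by (simp add: Basis_def)
qed

lemma mv_Basis: "mv p q \<Longrightarrow> Basis (fst p) (snd p) \<Longrightarrow> Basis (fst q) (snd q)"
proof (induction rule: mv.induct)
  case (sw u v)
  have ru: "reduced u" "reduced v" using sw by (auto simp: Basis_def)
  show ?case using Basis_comp[OF sw[simplified], of wY wX wY wX] ru
    by (simp add: img_def gx_def gy_def)
next
  case (nu u v)
  have ru: "reduced u" "reduced v" using nu by (auto simp: Basis_def)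
  have e: "sub (fmult wX (finv wY)) wY (fmult wX wY) = wX" "sub (fmult wX (finv wY)) wY wY = wY"
     "sub (fmult wX wY) wY (fmult wX (finv wY)) = wX" "sub (fmult wX wY) wY wY = wY"
    by (simp_all add: img_def gx_def gy_def fmult_def finv_def inv_letter_def)
  have "Basis (sub u v (fmult wX wY)) (sub u v wY)"
    using Basis_comp[OF nu[simplified], of "fmult wX wY" wY "fmult wX (finv wY)" wY] e by simp
  then show ?case using ru by (simp add: sub_fmult)
next
  case (iv u v)
  have ru: "reduced u" "reduced v" using iv by (auto simp: Basis_def)
  have e: "sub (finv wX) wY (finv wX) = wX" "sub (finv wX) wY wY = wY"
    by (simp_all add: img_def gx_def gy_def fmult_def finv_def inv_letter_def)
  have "Basis (sub u v (finv wX)) (sub u v wY)"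
    using Basis_comp[OF iv[simplified], of "finv wX" wY "finv wX" wY] e by simp
  then show ?case using ru by (simp add: sub_finv)
next
  case (cjm g u v)
  have ru: "reduced u" "reduced v" and bu: "bij_betw (sub u v) RW RW" using cjm by (auto simp: Basis_def)
  have bc: "bij_betw (cj g) RW RW"
    by (rule bij_betw_byWitness[where f' = "cj (finv g)"]) (use cjm in \<open>auto simp: RW_def cj_cj cj_cj'\<close>)
  have "bij_betw (cj g \<circ> sub u v) RW RW" by (rule bij_betw_trans[OF bu bc])
  moreover have "bij_betw (sub (cj g u) (cj g v)) RW RW = bij_betw (cj g \<circ> sub u v) RW RW"
    by (rule bij_betw_cong) (use ru cjm in \<open>simp add: RW_def sub_cj\<close>)
  ultimately have "bij_betw (sub (cj g u) (cj g v)) RW RW" by simp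
  then show ?case by (simp add: Basis_def)
qed

lemma mvs_Basis: "mv\<^sup>*\<^sup>* p q \<Longrightarrow> Basis (fst p) (snd p) \<Longrightarrow> Basis (fst q) (snd q)"
  by (induction rule: rtranclp_induct) (auto dest: mv_Basis)

lemma Basis_inj: "Basis u v \<Longrightarrow> reduced w \<Longrightarrow> reduced w' \<Longrightarrow> sub u v w = sub u v w' \<Longrightarrow> w = w'"
  by (auto simp: Basis_def bij_betw_def inj_on_def RW_def)

lemma PP_id: "PP n wX wY"
  unfolding PP_def using RP_AK[of n] by (cases "AK n") (simp add: sub_id)

lemma PP_inv2: "n \<ge> 1 \<Longrightarrow> reduced u \<Longrightarrow> reduced v \<Longrightarrow> PP n u (finv v) \<longleftrightarrow> PP n u v"
  by (metis PP_inv PP_swap reduced_finv)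

lemma PP_letters:
  assumes n: "n \<ge> 1" and s: "snd p \<noteq> snd q"
  shows "PP n [p] [q]"
proof -
  have A: "PP n [p] [q]" if "snd p = False" "snd q = True" for p q
  proof -
    have p: "[p] = wX \<or> [p] = finv wX" using that
      by (cases p) (auto simp: gx_def finv_def inv_letter_def)
    have q: "[q] = wY \<or> [q] = finv wY" using that
      by (cases q) (auto simp: gy_def finv_def inv_letter_def)
    have "PP n wX wY" by (rule PP_id)
    then show ?thesis using p q PP_inv[OF n, of wX wY] PP_inv2[OF n, of wX wY]
      PP_inv2[OF n, of "finv wX" wY] by auto
  qed
  show ?thesis
  proof (cases "snd p")
    case True
    then have "snd q = False" using s by simp
    then show ?thesis using A[of q p] True PP_swap[of "[q]" "[p]" n] by simp
  next
    case False
    then show ?thesis using A s by simp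
  qed
qed

lemma base_case:
  assumes B: "Basis u v" and l: "length u + length v \<le> 2" and n: "n \<ge> 1"
  shows "PP n u v"
proof -
  have ru: "reduced u" "reduced v" using B by (auto simp: Basis_def)
  have "u \<noteq> []"
  proof
    assume "u = []"
    then have "sub u v [gx] = sub u v []" by simp
    then show False using Basis_inj[OF B, of "[gx]" "[]"] by simp
  qed
  moreover have "v \<noteq> []"
  proof
    assume "v = []"
    then have "sub u v [gy] = sub u v []" by simp
    then show False using Basis_inj[OF B, of "[gy]" "[]"] by simp
  qed
  ultimately obtain p q where pq: "u = [p]" "v = [q]" using l
    by (cases u; cases v) auto
  have "snd p \<noteq> snd q"
  proof
    assume e: "snd p = snd q"
    then have "q = p \<or> q = inv_letter p" by (cases p; cases q) (auto simp: inv_letter_def)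
    then show False
    proof
      assume "q = p"
      then have "sub u v [gx, inv_letter gy] = sub u v []" using pq
        by (simp add: img_def gx_def gy_def inv_letter_def fmult_def finv_def)
      then show False using Basis_inj[OF B, of "[gx, inv_letter gy]" "[]"]
        by (simp add: gx_def gy_def inv_letter_def)
    next
      assume "q = inv_letter p"
      then have "sub u v [gx, gy] = sub u v []" using pq
        by (simp add: img_def gx_def gy_def fmult_def)
      then show False using Basis_inj[OF B, of "[gx, gy]" "[]"]
        by (simp add: gx_def gy_def inv_letter_def)
    qed
  qed
  then show ?thesis using PP_letters[OF n] pq by simp
qed



fun cpre :: "letter list \<Rightarrow> letter list \<Rightarrow> nat" where
  "cpre (x # xs) (y # ys) = (if y = inv_letter x then Suc (cpre xs ys) else 0)"
| "cpre _ _ = 0"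

definition canc :: "letter list \<Rightarrow> letter list \<Rightarrow> nat" where
  "canc a b = cpre (rev a) b"

lemma cpre_le: "cpre xs ys \<le> length xs \<and> cpre xs ys \<le> length ys"
  by (induction xs ys rule: cpre.induct) auto

lemma cpre_nth: "i < cpre xs ys \<Longrightarrow> ys ! i = inv_letter (xs ! i)"
proof (induction xs ys arbitrary: i rule: cpre.induct)
  case (1 x xs y ys)
  then show ?case by (cases i) (auto split: if_splits)
qed auto

lemma cpre_prefix: "take (Suc (cpre xs ys')) ys = take (Suc (cpre xs ys')) ys' \<Longrightarrow> cpre xs ys = cpre xs ys'"
proof (induction xs ys' arbitrary: ys rule: cpre.induct)
  case (1 x xs y ys')
  obtain ys1 where ys: "ys = y # ys1" and t: "take (cpre (x # xs) (y # ys')) ys1 = take (cpre (x # xs) (y # ys')) ys'"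
    using "1.prems" by (cases ys) auto
  show ?case
  proof (cases "y = inv_letter x")
    case True
    then have "take (Suc (cpre xs ys')) ys1 = take (Suc (cpre xs ys')) ys'" using t by simp
    then have "cpre xs ys1 = cpre xs ys'" by (rule "1.IH"[OF True])
    then show ?thesis using ys True by simp
  next
    case False
    then show ?thesis using ys by simp
  qed
next
  case ("2_1" ys')
  then show ?case by simp
next
  case ("2_2" x xs)
  then show ?case by (cases ys) auto
qed

lemma canc_le: "canc a b \<le> length a" "canc a b \<le> length b"
  using cpre_le[of "rev a" b] by (auto simp: canc_def)

lemma reduce_pair: "reduce (p @ [x, inv_letter x] @ q) = reduce (p @ q)"
proof -
  have "reduce ([x, inv_letter x] @ q) = reduce q"
    using cancel1_cancel1[of "reduce q" x] by simp
  then show ?thesis by (metis reduce_append_right)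
qed

lemma fmult_canc:
  "reduced a \<Longrightarrow> reduced b \<Longrightarrow> fmult a b = take (length a - canc a b) a @ drop (canc a b) b"
proof (induction a arbitrary: b rule: rev_induct)
  case Nil then show ?case by (simp add: canc_def)
next
  case (snoc x a')
  have ra: "reduced a'" using snoc.prems(1) by (simp add: reduced_append)
  show ?case
  proof (cases b)
    case Nil then show ?thesis using snoc.prems by (simp add: canc_def)
  next
    case (Cons y b')
    have rb: "reduced b'" using snoc.prems(2) Cons by (simp add: reduced_Cons)
    show ?thesis
    proof (cases "y = inv_letter x")
      case True
      have c: "canc (a' @ [x]) b = Suc (canc a' b')" using Cons True by (simp add: canc_def)
      have "fmult (a' @ [x]) b = reduce (a' @ [x, inv_letter x] @ b')"
        using Cons True by (simp add: fmult_def)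
      also have "\<dots> = fmult a' b'" unfolding fmult_def by (rule reduce_pair)
      also have "\<dots> = take (length a' - canc a' b') a' @ drop (canc a' b') b'"
        by (rule snoc.IH[OF ra rb])
      finally show ?thesis using c Cons canc_le[of a' b'] by simp
    next
      case False
      have c: "canc (a' @ [x]) b = 0" using Cons False by (simp add: canc_def)
      have "reduced ((a' @ [x]) @ b)"
        using snoc.prems Cons False by (auto simp: reduced_append)
      then show ?thesis using c by (simp add: fmult_append)
    qed
  qed
qed

lemma length_fmult: "reduced a \<Longrightarrow> reduced b \<Longrightarrow> length (fmult a b) = length a + length b - 2 * canc a b"
  using fmult_canc[of a b] canc_le[of a b] by simp

lemma canc_nth: "i < canc a b \<Longrightarrow> b ! i = inv_letter (a ! (length a - Suc i))"
  using cpre_nth[of i "rev a" b] cpre_le[of "rev a" b] by (simp add: canc_def rev_nth)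

lemma reduced_nth: "reduced a \<Longrightarrow> Suc i < length a \<Longrightarrow> a ! Suc i \<noteq> inv_letter (a ! i)"
proof (induction a arbitrary: i)
  case (Cons x a)
  show ?case
  proof (cases i)
    case 0 then show ?thesis using Cons.prems by (cases a) auto
  next
    case (Suc j) then show ?thesis using Cons reduced_tl[OF Cons.prems(1)] by simp
  qed
qed simp

lemma canc_self:
  assumes r: "reduced a" and ne: "a \<noteq> []"
  shows "2 * canc a a < length a"
proof (rule ccontr)
  assume "\<not> 2 * canc a a < length a"
  then have c: "length a \<le> 2 * canc a a" by simp
  define L where "L = length a"
  have L: "L > 0" using ne by (simp add: L_def)
  show False
  proof (cases "odd L")
    case True
    then obtain j where j: "L = 2 * j + 1" by (metis oddE)
    have "j < canc a a" using c j L_def by simp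
    then have "a ! j = inv_letter (a ! (L - Suc j))" using canc_nth[of j a a] by (simp add: L_def)
    moreover have "L - Suc j = j" using j by simp
    ultimately show False by simp
  next
    case False
    then obtain j where j: "L = 2 * j" by (metis evenE)
    have j1: "j \<ge> 1" using j L by simp
    have "j - 1 < canc a a" using c j L_def j1 by simp
    then have "a ! (j - 1) = inv_letter (a ! (L - Suc (j - 1)))" using canc_nth[of "j - 1" a a] by (simp add: L_def)
    moreover have "L - Suc (j - 1) = Suc (j - 1)" using j j1 by simp
    moreover have "a ! Suc (j - 1) \<noteq> inv_letter (a ! (j - 1))"
      using reduced_nth[OF r, of "j - 1"] j j1 L_def by simp
    ultimately show False by (metis inv_letter_inv)
  qed
qed

lemma canc_take:
  assumes m: "m \<le> canc a b"
  shows "drop (length a - m) a = finv (take m b)"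
proof (rule nth_equalityI)
  have ml: "m \<le> length a" "m \<le> length b" using m canc_le[of a b] by auto
  show "length (drop (length a - m) a) = length (finv (take m b))" using ml by simp
  fix i assume "i < length (drop (length a - m) a)"
  then have i: "i < m" using ml by simp
  have "finv (take m b) ! i = inv_letter (take m b ! (m - Suc i))"
    using i ml by (simp add: finv_def rev_nth)
  also have "\<dots> = inv_letter (b ! (m - Suc i))" using i by simp
  also have "\<dots> = a ! (length a - Suc (m - Suc i))"
    using canc_nth[of "m - Suc i" a b] i m by simp
  also have "length a - Suc (m - Suc i) = length a - m + i" using i ml by simp
  finally show "drop (length a - m) a ! i = finv (take m b) ! i" using ml i by simp
qed

lemma canc_prefix:
  assumes "canc a z' < K" "take K z = take K z'"
  shows "canc a z = canc a z'"
proof -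
  have "take (Suc (canc a z')) z = take (Suc (canc a z')) z'"
    using assms by (metis Suc_leI min.absorb_iff1 take_take)
  then show ?thesis unfolding canc_def by (rule cpre_prefix)
qed

lemma reduced_finv_app: "reduced (finv d @ d) \<Longrightarrow> d = []"
proof (cases d)
  case (Cons x d')
  assume r: "reduced (finv d @ d)"
  have "finv d @ d = (finv d' @ [inv_letter x]) @ (x # d')" by (simp add: Cons finv_Cons)
  then have "reduced ((finv d' @ [inv_letter x]) @ (x # d'))" using r by simp
  then show ?thesis by (simp only: reduced_append) simp
qed simp

lemma length_reduce: "length (reduce w) \<le> length w"
proof (induction w)
  case (Cons a w)
  then show ?case by (cases "reduce w") auto
qed simp

lemma length_fmult_le: "length (fmult a b) \<le> length a + length b"
  using length_reduce[of "a @ b"] by (simp add: fmult_def)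



definition Kc :: "letter list \<Rightarrow> letter list \<Rightarrow> letter \<Rightarrow> letter list \<Rightarrow> nat" where
  "Kc u v l w = length (img u v l) - (case w of [] \<Rightarrow> 0 | l'' # _ \<Rightarrow> canc (img u v l) (img u v l''))"

definition COND :: "letter list \<Rightarrow> letter list \<Rightarrow> bool" where
  "COND u v \<longleftrightarrow> (\<forall>l l' l''. l' \<noteq> inv_letter l \<longrightarrow> l'' \<noteq> inv_letter l' \<longrightarrow>
     canc (img u v l) (img u v l') + canc (img u v l') (img u v l'') < length (img u v l'))"

lemma chain:
  assumes ru: "reduced u" "reduced v" and C: "COND u v"
  shows "reduced (l' # w) \<Longrightarrow> \<exists>rest. sub u v (l' # w) = take (Kc u v l' w) (img u v l') @ rest \<and> length w \<le> length rest"
proof (induction w arbitrary: l')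
  case Nil
  then show ?case using ru by (auto simp: Kc_def)
next
  case (Cons l'' w')
  have r2: "reduced (l'' # w')" using Cons.prems by (rule reduced_tl)
  have ne: "l'' \<noteq> inv_letter l'" using Cons.prems by simp
  obtain rest'' where R: "sub u v (l'' # w') = take (Kc u v l'' w') (img u v l'') @ rest''"
    and lr: "length w' \<le> length rest''" using Cons.IH[OF r2] by blast
  define a where "a = img u v l'"
  define z' where "z' = img u v l''"
  define z where "z = sub u v (l'' # w')"
  define K'' where "K'' = Kc u v l'' w'"
  define c where "c = canc a z'"
  have K''le: "K'' \<le> length z'" by (simp add: K''_def Kc_def z'_def)
  have cK: "c < K''"
  proof (cases w')
    case Nil
    have "canc a z' + canc z' z' < length z'"
      using C ne unfolding COND_def a_def z'_def by (metis inv_letter_neq(2))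
    then show ?thesis using Nil by (simp add: c_def K''_def Kc_def z'_def)
  next
    case (Cons l3 w3)
    have "l3 \<noteq> inv_letter l''" using r2 Cons by simp
    then have "canc a z' + canc z' (img u v l3) < length z'"
      using C ne unfolding COND_def a_def z'_def by blast
    then show ?thesis using Cons by (simp add: c_def K''_def Kc_def z'_def)
  qed
  have tz: "take K'' z = take K'' z'" using R K''le by (simp add: z_def K''_def z'_def)
  have cz: "canc a z = c" using canc_prefix[OF _ tz] cK by (simp add: c_def)
  have ra: "reduced a" "reduced z" using ru by (simp_all add: a_def z_def)
  have "sub u v (l' # l'' # w') = fmult a z" by (simp add: a_def z_def)
  also have "\<dots> = take (length a - c) a @ drop c z" using fmult_canc[OF ra] cz by simp
  also have "drop c z = drop c (take K'' z') @ rest''"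
    using R cK K''le by (simp add: z_def K''_def z'_def)
  finally have E: "sub u v (l' # l'' # w') = take (length a - c) a @ (drop c (take K'' z') @ rest'')" .
  have "Kc u v l' (l'' # w') = length a - c" by (simp add: Kc_def a_def c_def z'_def)
  moreover have "length (l'' # w') \<le> length (drop c (take K'' z') @ rest'')"
    using cK K''le lr by simp
  ultimately show ?case using E by (metis a_def)
qed

lemma length_sub:
  assumes ru: "reduced u" "reduced v" and C: "COND u v" and w: "reduced w"
  shows "length w \<le> length (sub u v w)"
proof (cases w)
  case (Cons l' w'')
  obtain rest where R: "sub u v (l' # w'') = take (Kc u v l' w'') (img u v l') @ rest"
    and lr: "length w'' \<le> length rest" using chain[OF ru C, of l' w''] w Cons by blast
  have "Kc u v l' w'' \<ge> 1"
  proof (cases w'')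
    case Nil
    have "canc (img u v l') (img u v l') + canc (img u v l') (img u v l') < length (img u v l')"
      using C unfolding COND_def by (metis inv_letter_neq(2))
    then show ?thesis using Nil by (simp add: Kc_def)
  next
    case (Cons l3 w3)
    have "l3 \<noteq> inv_letter l'" using w Cons \<open>w = l' # w''\<close> by simp
    then have "canc (img u v l') (img u v l') + canc (img u v l') (img u v l3) < length (img u v l')"
      using C unfolding COND_def by (metis inv_letter_neq(2))
    then show ?thesis using Cons by (simp add: Kc_def)
  qed
  moreover have "Kc u v l' w'' \<le> length (img u v l')" by (simp add: Kc_def)
  ultimately show ?thesis using R lr Cons by simp
qed simp



lemma Basis_ne: "Basis u v \<Longrightarrow> u \<noteq> [] \<and> v \<noteq> []"
proof -
  assume B: "Basis u v"
  have ru: "reduced u" "reduced v" using B by (auto simp: Basis_def)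
  have "u \<noteq> []"
  proof
    assume "u = []"
    then have "sub u v [gx] = sub u v []" by simp
    then show False using Basis_inj[OF B, of "[gx]" "[]"] by simp
  qed
  moreover have "v \<noteq> []"
  proof
    assume "v = []"
    then have "sub u v [gy] = sub u v []" by simp
    then show False using Basis_inj[OF B, of "[gy]" "[]"] by simp
  qed
  ultimately show ?thesis by simp
qed

lemma mv1: "mv p q \<Longrightarrow> mv\<^sup>*\<^sup>* p q" by simp

lemma cl_inv2: "mv\<^sup>*\<^sup>* (u, v) (u, finv v)"
proof -
  have "mv (u, v) (v, u)" by (rule mv.sw)
  moreover have "mv (v, u) (finv v, u)" by (rule mv.iv)
  moreover have "mv (finv v, u) (u, finv v)" by (rule mv.sw)
  ultimately show ?thesis by (meson rtranclp.rtrancl_into_rtrancl rtranclp.rtrancl_refl)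
qed

lemma cl_inv1: "mv\<^sup>*\<^sup>* (u, v) (finv u, v)"
  by (simp add: mv.iv r_into_rtranclp)

lemma mv_left:
  assumes r: "reduced A" "reduced B"
  shows "mv\<^sup>*\<^sup>* (A, B) (A, fmult A B)"
proof -
  have s1: "mv\<^sup>*\<^sup>* (A, B) (finv A, finv B)"
    using cl_inv1[of A B] cl_inv2[of "finv A" B] by simp
  have s2: "mv\<^sup>*\<^sup>* (finv A, finv B) (fmult (finv B) (finv A), finv A)"
    using mv.sw[of "finv A" "finv B"] mv.nu[of "finv B" "finv A"] by (meson converse_rtranclp_into_rtranclp r_into_rtranclp)
  have e: "finv (fmult (finv B) (finv A)) = fmult A B" using r by (simp add: finv_fmult)
  have s3: "mv\<^sup>*\<^sup>* (fmult (finv B) (finv A), finv A) (A, fmult A B)"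
  proof -
    have "mv (fmult (finv B) (finv A), finv A) (fmult A B, finv A)"
      using mv.iv[of "fmult (finv B) (finv A)" "finv A"] e by simp
    moreover have "mv (fmult A B, finv A) (finv A, fmult A B)" by (rule mv.sw)
    moreover have "mv (finv A, fmult A B) (A, fmult A B)" using mv.iv[of "finv A" "fmult A B"] by simp
    ultimately show ?thesis by (meson converse_rtranclp_into_rtranclp r_into_rtranclp)
  qed
  show ?thesis using s1 s2 s3 by (meson rtranclp_trans)
qed

lemma class_pm: "mv\<^sup>*\<^sup>* (p, q) (if e1 then finv p else p, if e2 then finv q else q)"
proof -
  have X: "mv\<^sup>*\<^sup>* (p, q) (if e1 then finv p else p, q)"
    by (cases e1) (auto simp: cl_inv1)
  have Y: "mv\<^sup>*\<^sup>* (if e1 then finv p else p, q) (if e1 then finv p else p, if e2 then finv q else q)"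
    by (cases e2) (auto simp: cl_inv2)
  show ?thesis using X Y by (rule rtranclp_trans)
qed

lemma class_pair:
  assumes s: "snd l \<noteq> snd l'"
  shows "mv\<^sup>*\<^sup>* (u, v) (img u v l, img u v l')"
proof (cases "snd l")
  case False
  have e: "img u v l = (if fst l then finv u else u)" "img u v l' = (if fst l' then finv v else v)"
    using False s by (auto simp: img_def)
  show ?thesis unfolding e by (rule class_pm)
next
  case True
  have e: "img u v l = (if fst l then finv v else v)" "img u v l' = (if fst l' then finv u else u)"
    using True s by (auto simp: img_def)
  have "mv\<^sup>*\<^sup>* (v, u) (img u v l, img u v l')"
    unfolding e by (rule class_pm)
  then show ?thesis using mv.sw[of u v] by (simp add: converse_rtranclp_into_rtranclp)
qed

lemma length_img: "length (img u v l) = (if snd l then length v else length u)"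
  by (simp add: img_def)

lemma take_finv: "take m (finv a) = finv (drop (length a - m) a)"
  by (simp add: finv_def take_rev drop_map)

lemma nielsen_min:
  assumes B: "Basis u v"
    and M: "\<And>p. mv\<^sup>*\<^sup>* (u, v) p \<Longrightarrow> length u + length v \<le> length (fst p) + length (snd p)"
  shows "length u + length v \<le> 2"
proof -
  have ru: "reduced u" "reduced v" using B by (auto simp: Basis_def)
  have une: "u \<noteq> []" "v \<noteq> []" using Basis_ne[OF B] by auto
  have ine: "img u v l \<noteq> []" for l using une by (auto simp: img_def finv_def)
  have ri: "reduced (img u v l)" for l using ru by simp
  have sz: "length (img u v l) + length (img u v l') = length u + length v" if "snd l \<noteq> snd l'" for l l'
    using that by (auto simp: length_img)
  have ineq: "2 * canc (img u v l) (img u v l') \<le> length (img u v l') \<and>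
              2 * canc (img u v l) (img u v l') \<le> length (img u v l)" if s: "snd l \<noteq> snd l'" for l l'
  proof -
    let ?A = "img u v l" and ?B = "img u v l'"
    have c: "mv\<^sup>*\<^sup>* (u, v) (?A, ?B)" by (rule class_pair[OF s])
    have "mv\<^sup>*\<^sup>* (u, v) (fmult ?A ?B, ?B)" using c mv.nu[of ?A ?B] by (simp add: rtranclp.rtrancl_into_rtrancl)
    then have 1: "length u + length v \<le> length (fmult ?A ?B) + length ?B" using M by fastforce
    have "mv\<^sup>*\<^sup>* (u, v) (?A, fmult ?A ?B)" using c mv_left[OF ri ri] by (meson rtranclp_trans)
    then have 2: "length u + length v \<le> length ?A + length (fmult ?A ?B)" using M by fastforce
    show ?thesis using 1 2 sz[OF s] length_fmult[OF ri ri, of l l'] canc_le[of ?A ?B] by linarith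
  qed
  have same: "l' = l" if "l' \<noteq> inv_letter l" "snd l = snd l'" for l l'
    using that by (cases l; cases l') (auto simp: inv_letter_def)
  have ineq2: "2 * canc (img u v l) (img u v l') \<le> length (img u v l') \<and>
               2 * canc (img u v l) (img u v l') \<le> length (img u v l) \<and>
               (l' = l \<longrightarrow> 2 * canc (img u v l) (img u v l') < length (img u v l'))"
    if "l' \<noteq> inv_letter l" for l l'
  proof (cases "snd l = snd l'")
    case True
    then have "l' = l" using same that by blast
    then show ?thesis using canc_self[OF ri ine, of l] by simp
  next
    case False
    then show ?thesis using ineq[OF False] False by auto
  qed
  have C: "COND u v"
    unfolding COND_def
  proof (intro allI impI, rule ccontr)
    fix l l' l''
    assume n1: "l' \<noteq> inv_letter l" and n2: "l'' \<noteq> inv_letter l'"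
    let ?a = "img u v l" and ?b = "img u v l'" and ?c = "img u v l''"
    assume "\<not> canc ?a ?b + canc ?b ?c < length ?b"
    then have ge: "length ?b \<le> canc ?a ?b + canc ?b ?c" by simp
    have i1: "2 * canc ?a ?b \<le> length ?b" "2 * canc ?a ?b \<le> length ?a" using ineq2[OF n1] by auto
    have i2: "2 * canc ?b ?c \<le> length ?b" using ineq2[OF n2] by auto
    define m where "m = canc ?a ?b"
    have m: "canc ?b ?c = m" "length ?b = 2 * m" using ge i1 i2 by (auto simp: m_def)
    have m1: "m \<ge> 1" using m ine[of l'] by (cases m) auto
    have d1: "l \<noteq> l'" using ineq2[OF n1] m m_def by auto
    have d2: "l'' \<noteq> l'" using ineq2[OF n2] m by auto
    have s1: "snd l \<noteq> snd l'" using same[OF n1] d1 by metis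
    have s2: "snd l' \<noteq> snd l''" using same[OF n2] d2 by metis
    have s3: "snd l = snd l''" using s1 s2 by auto
    have ta: "drop (length ?a - m) ?a = finv (take m ?b)" using canc_take[of m ?a ?b] by (simp add: m_def)
    have tb: "drop m ?b = finv (take m ?c)" using canc_take[of m ?b ?c] m by simp
    have "l'' = l \<or> l'' = inv_letter l" using s3 by (cases l; cases l'') (auto simp: inv_letter_def)
    then show False
    proof
      assume "l'' = inv_letter l"
      then have "?c = finv ?a" by (simp add: img_inv)
      then have "take m ?c = finv (drop (length ?a - m) ?a)" by (simp add: take_finv)
      then have "take m ?c = take m ?b" using ta by simp
      then have "?b = take m ?b @ finv (take m ?b)" using tb by (metis append_take_drop_id)
      then have "reduced (finv (finv (take m ?b)) @ finv (take m ?b))" using ri[of l'] by (metis finv_finv)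
      then have "finv (take m ?b) = []" by (rule reduced_finv_app)
      then have "take m ?b = []" by (metis finv_finv finv_Nil)
      then show False using m m1 by simp
    next
      assume ll: "l'' = l"
      define b1 where "b1 = take m ?b"
      define b2 where "b2 = drop m ?b"
      define z where "z = drop m (take (length ?a - m) ?a)"
      have la: "length ?a \<ge> 2 * m" using i1 m_def by simp
      have tc: "take m ?a = finv b2" using tb ll by (simp add: b2_def)
      have a_eq: "?a = (finv b2 @ z) @ finv b1"
      proof -
        have "?a = take (length ?a - m) ?a @ drop (length ?a - m) ?a" by simp
        moreover have "take (length ?a - m) ?a = take m ?a @ z"
        proof -
          have "take m (take (length ?a - m) ?a) = take m ?a" using la by (simp add: min_def, arith)
          then show ?thesis unfolding z_def by (metis append_take_drop_id)
        qed
        ultimately show ?thesis using ta tc by (simp add: b1_def)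
      qed
      have b_eq: "?b = b1 @ b2" by (simp add: b1_def b2_def)
      have rb: "reduced b1" "reduced b2" using ri[of l'] b_eq reduced_append by metis+
      have rz: "reduced z" "reduced (finv b2 @ z)" using ri[of l] a_eq reduced_append by metis+
      have bf: "?b = fmult b1 b2" using b_eq ri[of l'] by (simp add: fmult_append)
      have af: "?a = fmult (fmult (finv b2) z) (finv b1)"
        using a_eq ri[of l] rz by (simp add: fmult_append reduced_append)
      have cl: "mv\<^sup>*\<^sup>* (u, v) (cj b1 ?b, cj b1 (fmult ?b ?a))"
      proof -
        have "mv\<^sup>*\<^sup>* (u, v) (?b, ?a)" using class_pair[of l' l] s1 by simp
        moreover have "mv\<^sup>*\<^sup>* (?b, ?a) (?b, fmult ?b ?a)" by (rule mv_left[OF ri ri])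
        moreover have "mv (?b, fmult ?b ?a) (cj b1 ?b, cj b1 (fmult ?b ?a))" by (rule mv.cjm[OF rb(1)])
        ultimately show ?thesis by (meson rtranclp_trans rtranclp.rtrancl_into_rtrancl)
      qed
      have e1: "cj b1 (fmult ?b ?a) = z"
        unfolding bf af using rb rz
        by (simp add: cj_def fmult_assoc fmult_cancel1 fmult_cancel2 fmult_finv1 fmult_finv2)
      have e2: "cj b1 ?b = fmult b2 b1"
        unfolding bf using rb
        by (simp add: cj_def fmult_assoc fmult_cancel1 fmult_cancel2 fmult_finv1 fmult_finv2)
      have "length (fmult b2 b1) \<le> 2 * m"
        using length_fmult_le[of b2 b1] m by (simp add: b1_def b2_def)
      moreover have "length z = length ?a - 2 * m" using la by (simp add: z_def)
      moreover have "length u + length v \<le> length (fmult b2 b1) + length z"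
        using M[OF cl] e1 e2 by simp
      moreover have "length ?a + length ?b = length u + length v" using sz[OF s1] by simp
      ultimately show False using m m1 la by linarith
    qed
  qed
  have surj: "\<exists>w. reduced w \<and> sub u v w = t" if "reduced t" for t
  proof -
    have "t \<in> sub u v ` RW" using B that unfolding Basis_def bij_betw_def RW_def by auto
    then show ?thesis by (auto simp: RW_def)
  qed
  have onel: "\<exists>l. img u v l = [g]" for g
  proof -
    obtain w where w: "reduced w" "sub u v w = [g]" using surj[of "[g]"] by auto
    have "length w \<le> 1" using length_sub[OF ru C w(1)] w(2) by simp
    moreover have "w \<noteq> []" using w(2) by auto
    ultimately obtain l where "w = [l]" by (cases w) auto
    then have "img u v l = [g]" using w ru by auto
    then show ?thesis by blast
  qed
  obtain l1 where l1: "img u v l1 = [gx]" using onel by blast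
  obtain l2 where l2: "img u v l2 = [gy]" using onel by blast
  have "snd l1 \<noteq> snd l2"
  proof
    assume e: "snd l1 = snd l2"
    then have "l2 = l1 \<or> l2 = inv_letter l1" by (cases l1; cases l2) (auto simp: inv_letter_def)
    then show False
    proof
      assume "l2 = l1" then show False using l1 l2 by (simp add: gx_def gy_def)
    next
      assume "l2 = inv_letter l1"
      then have "img u v l2 = finv [gx]" using l1 by (simp add: img_inv)
      then show False using l2 by (simp add: finv_def gx_def gy_def inv_letter_def)
    qed
  qed
  then show ?thesis using sz[of l1 l2] l1 l2 by simp
qed



lemma all_PP:
  assumes n: "n \<ge> 1"
  shows "Basis u v \<Longrightarrow> PP n u v"
proof (induction "length u + length v" arbitrary: u v rule: less_induct)
  case less
  have ru: "reduced u" "reduced v" using less.prems by (auto simp: Basis_def)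
  show ?case
  proof (cases "\<exists>p. mv\<^sup>*\<^sup>* (u, v) p \<and> length (fst p) + length (snd p) < length u + length v")
    case True
    then obtain p where p: "mv\<^sup>*\<^sup>* (u, v) p" "length (fst p) + length (snd p) < length u + length v" by blast
    have "Basis (fst p) (snd p)" using mvs_Basis[OF p(1)] less.prems by simp
    then have "PP n (fst p) (snd p)" using less.hyps[OF p(2)] by simp
    then show ?thesis using mvs_PP[OF p(1) n] ru by simp
  next
    case False
    then have "length u + length v \<le> 2"
      using nielsen_min[OF less.prems] by (meson not_le)
    then show ?thesis using base_case[OF less.prems _ n] by simp
  qed
qed

theorem proposition7:
  fixes n :: nat and \<phi> :: "letter list \<Rightarrow> letter list"
  assumes "n > 2" and "\<phi> \<in> Aut_F"
  shows "AC_equiv (\<phi> (fst (AK n)), \<phi> (snd (AK n))) (AK n)"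
proof -
  have n: "n \<ge> 1" using assms(1) by simp
  have h: "\<phi> \<in> hom free_group free_group" using assms(2) by (simp add: Aut_F_def iso_def)
  have "PP n (\<phi> wX) (\<phi> wY)" by (rule all_PP[OF n Basis_init[OF assms(2)]])
  moreover have "\<phi> (fst (AK n)) = sub (\<phi> wX) (\<phi> wY) (fst (AK n))"
    "\<phi> (snd (AK n)) = sub (\<phi> wX) (\<phi> wY) (snd (AK n))"
    using RP_AK[of n] by (auto simp: RP_def intro: hom_sub_eq[OF h])
  ultimately show ?thesis by (simp add: PP_def)
qed


end
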